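(* Let $A$ be a nonempty set and let $\mathrm{FVL}(A)$ be as described in the context. Let $\mathcal N$ be the set of all lattice seminorms $\nu$ on $\mathrm{FVL}(A)$ such that $\nu(\delta_a)\le 1$ for every $a\in A$, and for $f\in\mathrm{FVL}(A)$ put $\|f\|=\sup_{\nu\in\mathcal N}\nu(f)$. Then: (i) $\|f\|<\infty$ for every $f\in\mathrm{FVL}(A)$, and $\|\cdot\|$ is a lattice norm on $\mathrm{FVL}(A)$ belonging to $\mathcal N$; consequently it is the greatest lattice seminorm $\nu$ on $\mathrm{FVL}(A)$ with $\nu(\delta_a)\le 1$ for all $a\in A$. (ii) Let $X$ be the completion of $(\mathrm{FVL}(A),\|\cdot\|)$ (a Banach lattice containing $A$ via $a\mapsto\delta_a$). Then $X$ is a free Banach lattice over $A$: for every Banach lattice $Y$ and every function $\varphi\colon A\to Y$ with $\sup_{a\in A}\|\varphi(a)\|\le 1$, there exists a unique lattice homomorphism $\tilde\varphi\colon X\to Y$ with $\tilde\varphi(\delta_a)=\varphi(a)$ for all $a\in A$ and $\|\tilde\varphi\|\le 1$. Hence $X$ is (lattice isometric, via an isometry fixing $A$, to) $\mathrm{FBL}(A)$.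
   Context: For a set $A$ and $a\in A$, let $\delta_a\colon\mathbb R^A\to\mathbb R$ be the evaluation map $\delta_a(x)=x(a)$. The space $\mathbb R^{\mathbb R^A}$ of all real functions on $\mathbb R^A$ is a vector lattice under pointwise operations and order. $\mathrm{FVL}(A)$ denotes the vector sublattice of $\mathbb R^{\mathbb R^A}$ generated by $\{\delta_a: a\in A\}$; $A$ is identified with $\{\delta_a\}$. (This is the free vector lattice over $A$: every map from $A$ to a vector lattice $Y$ extends uniquely to a lattice homomorphism $\mathrm{FVL}(A)\to Y$.) A lattice seminorm on a vector lattice $L$ is a seminorm $\nu$ such that $|f|\le|g|$ implies $\nu(f)\le\nu(g)$; a lattice norm is a lattice seminorm that is a norm. A Banach lattice $X$ containing a set $A$ is a free Banach lattice over $A$, denoted $\mathrm{FBL}(A)$ (unique up to lattice isometry fixing $A$), if every function $\varphi\colon A\to Y$ into a Banach lattice $Y$ with $\sup_{a\in A}\|\varphi(a)\|\le1$ extends uniquely to a lattice homomorphism $\tilde\varphi\colon X\to Y$ with $\|\tilde\varphi\|\le 1$. *)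

theory Defs
  imports "HOL-Analysis.Analysis"
begin

text \<open>The set A is modelled as the (nonempty) type 'a; R^A is 'a \<Rightarrow> real.\<close>

definition delta :: "'a \<Rightarrow> ('a \<Rightarrow> real) \<Rightarrow> real" where
  "delta a = (\<lambda>x. x a)"

inductive_set FVL :: "(('a \<Rightarrow> real) \<Rightarrow> real) set" where
  gen: "delta a \<in> FVL"
| zero: "(\<lambda>x. 0) \<in> FVL"
| add: "f \<in> FVL \<Longrightarrow> g \<in> FVL \<Longrightarrow> (\<lambda>x. f x + g x) \<in> FVL"
| scale: "f \<in> FVL \<Longrightarrow> (\<lambda>x. c * f x) \<in> FVL"
| sup: "f \<in> FVL \<Longrightarrow> g \<in> FVL \<Longrightarrow> (\<lambda>x. max (f x) (g x)) \<in> FVL"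
| inf: "f \<in> FVL \<Longrightarrow> g \<in> FVL \<Longrightarrow> (\<lambda>x. min (f x) (g x)) \<in> FVL"

text \<open>Lattice seminorms / norms on FVL(A) (only their values on FVL(A) matter).\<close>
definition lattice_seminorm_FVL :: "((('a \<Rightarrow> real) \<Rightarrow> real) \<Rightarrow> real) \<Rightarrow> bool" where
  "lattice_seminorm_FVL \<nu> \<longleftrightarrow>
     (\<forall>f\<in>FVL. \<forall>g\<in>FVL. \<nu> (\<lambda>x. f x + g x) \<le> \<nu> f + \<nu> g) \<and>
     (\<forall>f\<in>FVL. \<forall>c::real. \<nu> (\<lambda>x. c * f x) = \<bar>c\<bar> * \<nu> f) \<and>
     (\<forall>f\<in>FVL. \<forall>g\<in>FVL. (\<forall>x. \<bar>f x\<bar> \<le> \<bar>g x\<bar>) \<longrightarrow> \<nu> f \<le> \<nu> g)"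

definition lattice_norm_FVL :: "((('a \<Rightarrow> real) \<Rightarrow> real) \<Rightarrow> real) \<Rightarrow> bool" where
  "lattice_norm_FVL \<nu> \<longleftrightarrow> lattice_seminorm_FVL \<nu> \<and> (\<forall>f\<in>FVL. \<nu> f = 0 \<longrightarrow> f = (\<lambda>x. 0))"

definition NN :: "((('a \<Rightarrow> real) \<Rightarrow> real) \<Rightarrow> real) set" where
  "NN = {\<nu>. lattice_seminorm_FVL \<nu> \<and> (\<forall>a. \<nu> (delta a) \<le> 1)}"

definition fbl_norm :: "(('a \<Rightarrow> real) \<Rightarrow> real) \<Rightarrow> real" where
  "fbl_norm f = (SUP \<nu>\<in>NN. \<nu> f)"

class banach_lattice = banach + lattice +
  assumes bl_add_mono: "x \<le> y \<Longrightarrow> x + z \<le> y + z"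
    and bl_scaleR_mono: "x \<le> y \<Longrightarrow> 0 \<le> c \<Longrightarrow> c *\<^sub>R x \<le> c *\<^sub>R y"
    and bl_norm_mono: "sup x (- x) \<le> sup y (- y) \<Longrightarrow> norm x \<le> norm y"

definition lattice_hom :: "('x::banach_lattice \<Rightarrow> 'y::banach_lattice) \<Rightarrow> bool" where
  "lattice_hom T \<longleftrightarrow> linear T \<and> (\<forall>x y. T (sup x y) = sup (T x) (T y))"

text \<open>j : FVL(A) \<rightarrow> X exhibits the Banach lattice X as a completion of (FVL(A), fbl_norm):
  a linear lattice isometric embedding with dense range.\<close>
definition is_completion_map :: "((('a \<Rightarrow> real) \<Rightarrow> real) \<Rightarrow> 'x::banach_lattice) \<Rightarrow> bool" where
  "is_completion_map j \<longleftrightarrow>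
     (\<forall>f\<in>FVL. \<forall>g\<in>FVL. j (\<lambda>x. f x + g x) = j f + j g) \<and>
     (\<forall>f\<in>FVL. \<forall>c. j (\<lambda>x. c * f x) = c *\<^sub>R j f) \<and>
     (\<forall>f\<in>FVL. \<forall>g\<in>FVL. j (\<lambda>x. max (f x) (g x)) = sup (j f) (j g)) \<and>
     (\<forall>f\<in>FVL. norm (j f) = fbl_norm f) \<and>
     closure (j ` FVL) = UNIV"

end

theory Submission
  imports Defs
begin


definition posp :: "'y::banach_lattice \<Rightarrow> 'y" where "posp x = sup x 0"
definition negp :: "'y::banach_lattice \<Rightarrow> 'y" where "negp x = sup (- x) 0"
definition absl :: "'y::banach_lattice \<Rightarrow> 'y" where "absl x = sup x (- x)"

context
  fixes dummy :: "'y::banach_lattice"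
begin
end

lemma bl_add_le_iff: "x + z \<le> y + z \<longleftrightarrow> (x::'y::banach_lattice) \<le> y"
proof
  assume "x + z \<le> y + z"
  then have "x + z + (-z) \<le> y + z + (-z)" by (rule bl_add_mono)
  then show "x \<le> y" by simp
qed (rule bl_add_mono)

lemma bl_add_le_iff2: "z + x \<le> z + y \<longleftrightarrow> (x::'y::banach_lattice) \<le> y"
  using bl_add_le_iff[of x z y] by (simp add: add.commute)

lemma bl_le_diff: "(x::'y::banach_lattice) \<le> y \<longleftrightarrow> 0 \<le> y - x"
  using bl_add_le_iff[of x "-x" y] by simp

lemma bl_add_mono2: "(a::'y::banach_lattice) \<le> b \<Longrightarrow> c \<le> d \<Longrightarrow> a + c \<le> b + d"
  by (metis bl_add_le_iff bl_add_le_iff2 order_trans)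

lemma bl_neg_le: "- x \<le> - y \<longleftrightarrow> (y::'y::banach_lattice) \<le> x"
  using bl_add_le_iff[of "-x" "x + y" "-y"] by (simp add: algebra_simps)

lemma bl_neg_le2: "- x \<le> y \<longleftrightarrow> - y \<le> (x::'y::banach_lattice)"
  using bl_neg_le[of x "-y"] by simp

lemma bl_sup_add: "sup x y + z = sup (x + z) (y + (z::'y::banach_lattice))"
proof (rule antisym)
  have "x \<le> sup (x + z) (y + z) + (- z)" "y \<le> sup (x + z) (y + z) + (- z)"
    using bl_add_le_iff[of x z "sup (x + z) (y + z) + (- z)"]
          bl_add_le_iff[of y z "sup (x + z) (y + z) + (- z)"] by auto
  then have "sup x y \<le> sup (x + z) (y + z) + (- z)" by simp
  then show "sup x y + z \<le> sup (x + z) (y + z)"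
    using bl_add_le_iff[of "sup x y" z "sup (x + z) (y + z) + (- z)"] by simp
qed (simp add: bl_add_le_iff)

lemma bl_inf_add: "inf x y + z = inf (x + z) (y + (z::'y::banach_lattice))"
proof (rule antisym)
  have "inf (x + z) (y + z) + (- z) \<le> x" "inf (x + z) (y + z) + (- z) \<le> y"
    using bl_add_le_iff[of "inf (x + z) (y + z) + (- z)" z x]
          bl_add_le_iff[of "inf (x + z) (y + z) + (- z)" z y] by auto
  then have "inf (x + z) (y + z) + (- z) \<le> inf x y" by simp
  then show "inf (x + z) (y + z) \<le> inf x y + z"
    using bl_add_le_iff[of "inf (x + z) (y + z) + (- z)" z "inf x y"] by simp
qed (simp add: bl_add_le_iff)

lemma bl_neg_sup: "- sup x y = inf (- x) (- (y::'y::banach_lattice))"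
proof (rule antisym)
  show "- sup x y \<le> inf (- x) (- y)" by (simp add: bl_neg_le)
  have "x \<le> - inf (- x) (- y)" "y \<le> - inf (- x) (- y)"
    using bl_neg_le[of "-x" "inf (-x) (-y)"] bl_neg_le[of "-y" "inf (-x) (-y)"] by simp_all
  then have "sup x y \<le> - inf (- x) (- y)" by simp
  then show "inf (- x) (- y) \<le> - sup x y" using bl_neg_le[of "-inf (-x) (-y)" "sup x y"] by simp
qed

lemma bl_neg_inf: "- inf x y = sup (- x) (- (y::'y::banach_lattice))"
  using bl_neg_sup[of "-x" "-y"] by (metis minus_minus)

lemma bl_sup_inf_sum: "sup x y + inf x y = x + (y::'y::banach_lattice)"
proof -
  have "inf x y = x + y + inf (- y) (- x)"
    using bl_inf_add[of "-y" "-x" "x + y"] by (simp add: algebra_simps)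
  also have "\<dots> = x + y - sup y x" by (simp add: bl_neg_sup)
  finally show ?thesis by (simp add: sup_commute algebra_simps)
qed

lemma bl_scale_sup: "0 \<le> c \<Longrightarrow> c *\<^sub>R sup x y = sup (c *\<^sub>R x) (c *\<^sub>R (y::'y::banach_lattice))"
proof (cases "c = 0")
  case False
  assume c: "0 \<le> c"
  then have cp: "0 < c" using False by simp
  show ?thesis
  proof (rule antisym)
    have "x \<le> inverse c *\<^sub>R sup (c *\<^sub>R x) (c *\<^sub>R y)"
      using bl_scaleR_mono[of "c *\<^sub>R x" "sup (c *\<^sub>R x) (c *\<^sub>R y)" "inverse c"] cp by simp
    moreover have "y \<le> inverse c *\<^sub>R sup (c *\<^sub>R x) (c *\<^sub>R y)"
      using bl_scaleR_mono[of "c *\<^sub>R y" "sup (c *\<^sub>R x) (c *\<^sub>R y)" "inverse c"] cp by simp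
    ultimately have "sup x y \<le> inverse c *\<^sub>R sup (c *\<^sub>R x) (c *\<^sub>R y)" by simp
    then have "c *\<^sub>R sup x y \<le> c *\<^sub>R (inverse c *\<^sub>R sup (c *\<^sub>R x) (c *\<^sub>R y))"
      using bl_scaleR_mono c by blast
    then show "c *\<^sub>R sup x y \<le> sup (c *\<^sub>R x) (c *\<^sub>R y)" using cp by simp
  qed (simp add: bl_scaleR_mono c)
qed simp

lemma bl_scale_inf: "0 \<le> c \<Longrightarrow> c *\<^sub>R inf x y = inf (c *\<^sub>R x) (c *\<^sub>R (y::'y::banach_lattice))"
proof -
  assume c: "0 \<le> c"
  have "c *\<^sub>R inf x y = - (c *\<^sub>R sup (-x) (-y))"
    by (metis bl_neg_inf minus_minus scaleR_minus_right)
  also have "\<dots> = inf (c *\<^sub>R x) (c *\<^sub>R y)"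
    using bl_scale_sup[OF c, of "-x" "-y"] by (simp add: bl_neg_sup)
  finally show ?thesis .
qed

lemma bl_nonneg_double: "0 \<le> a + a \<Longrightarrow> 0 \<le> (a::'y::banach_lattice)"
proof -
  assume "0 \<le> a + a"
  then have "(1/2::real) *\<^sub>R 0 \<le> (1/2::real) *\<^sub>R (a + a)" by (intro bl_scaleR_mono) auto
  also have "(1/2::real) *\<^sub>R (a + a) = a" by (simp add: scaleR_2[symmetric] del: scaleR_2)
  finally show ?thesis by simp
qed

lemma absl_ge: "x \<le> absl x" "- x \<le> absl (x::'y::banach_lattice)"
  by (auto simp: absl_def)

lemma absl_nonneg: "0 \<le> absl (x::'y::banach_lattice)"
proof (rule bl_nonneg_double)
  have "x + (- x) \<le> absl x + absl x" by (intro bl_add_mono2 absl_ge)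
  then show "0 \<le> absl x + absl x" by simp
qed

lemma absl_of_nonneg: "0 \<le> x \<Longrightarrow> absl x = (x::'y::banach_lattice)"
  unfolding absl_def by (metis bl_neg_le2 neg_0_equal_iff_equal order_trans sup.absorb1 neg_0_le_iff_le sup.orderE)



lemma absl_neg: "absl (- x) = absl (x::'y::banach_lattice)"
  by (simp add: absl_def sup_commute)

lemma sup_absl_0: "sup (absl x) 0 = absl (x::'y::banach_lattice)"
  using absl_nonneg[of x] by (simp add: le_iff_sup sup_commute)

lemma absl_eq: "sup (sup x 0) (sup (- x) 0) = absl (x::'y::banach_lattice)"
proof -
  have "sup (sup x 0) (sup (- x) 0) = sup (sup x (-x)) 0" by (simp add: sup_aci)
  then show ?thesis using sup_absl_0 by (simp add: absl_def)
qed

lemma posp_plus_negp: "posp x + negp x = absl (x::'y::banach_lattice)"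
proof -
  have "posp x + negp x = sup (x + negp x) (0 + negp x)"
    unfolding posp_def by (rule bl_sup_add)
  also have "x + negp x = sup 0 x"
    unfolding negp_def using bl_sup_add[of "-x" 0 x] by (simp add: add.commute)
  finally show ?thesis using absl_eq[of x] by (simp add: negp_def sup_commute)
qed

lemma posp_minus_negp: "posp x - negp x = (x::'y::banach_lattice)"
proof -
  have "- negp x = inf x 0" unfolding negp_def by (simp add: bl_neg_sup)
  then have "posp x - negp x = sup x 0 + inf x 0" by (simp add: posp_def)
  also have "\<dots> = x" using bl_sup_inf_sum[of x 0] by simp
  finally show ?thesis .
qed

lemma posp_inf_negp: "inf (posp x) (negp x) = (0::'y::banach_lattice)"
proof -
  have "sup (posp x) (negp x) + inf (posp x) (negp x) = posp x + negp x"
    by (rule bl_sup_inf_sum)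
  moreover have "sup (posp x) (negp x) = absl x" using absl_eq[of x] by (simp add: posp_def negp_def)
  ultimately show ?thesis using posp_plus_negp[of x] by simp
qed

lemma posp_nonneg: "0 \<le> posp x" and negp_nonneg: "0 \<le> negp (x::'y::banach_lattice)"
  by (auto simp: posp_def negp_def)

lemma negp_neg: "negp (- x) = posp (x::'y::banach_lattice)"
  by (simp add: posp_def negp_def)

lemma absl_abs: "absl (absl x) = absl (x::'y::banach_lattice)"
  by (simp add: absl_of_nonneg absl_nonneg)

lemma absl_zero_iff: "absl x = 0 \<longleftrightarrow> x = (0::'y::banach_lattice)"
proof
  assume "absl x = 0"
  then have "x \<le> 0" "- x \<le> 0" using absl_ge[of x] by auto
  moreover from this(2) have "0 \<le> x" using bl_neg_le[of x 0] by simp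
  ultimately show "x = 0" using order.antisym by blast
qed (simp add: absl_def)

lemma absl_triangle: "absl (x + y) \<le> absl x + absl (y::'y::banach_lattice)"
proof -
  have "x + y \<le> absl x + absl y" by (intro bl_add_mono2 absl_ge)
  moreover have "- (x + y) \<le> absl x + absl y"
    using bl_add_mono2[OF absl_ge(2)[of x] absl_ge(2)[of y]] by simp
  ultimately show ?thesis by (simp add: absl_def)
qed

lemma absl_scale_nonneg: "0 \<le> c \<Longrightarrow> absl (c *\<^sub>R x) = c *\<^sub>R absl (x::'y::banach_lattice)"
  unfolding absl_def using bl_scale_sup[of c x "-x"] by simp

lemma absl_scale: "absl (c *\<^sub>R x) = \<bar>c\<bar> *\<^sub>R absl (x::'y::banach_lattice)"
proof (cases "0 \<le> c")
  case True
  then show ?thesis using absl_scale_nonneg[OF True, of x] by simp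
next
  case False
  have "c *\<^sub>R x = (- c) *\<^sub>R (- x)" by simp
  then have "absl (c *\<^sub>R x) = (- c) *\<^sub>R absl (-x)" using absl_scale_nonneg[of "-c" "-x"] False by simp
  then show ?thesis using False by (simp add: absl_neg)
qed

lemma sup_le_add: "0 \<le> u \<Longrightarrow> 0 \<le> v \<Longrightarrow> sup u v \<le> u + (v::'y::banach_lattice)"
  using bl_add_mono2[of u u 0 v] bl_add_mono2[of 0 u v v] by simp

lemma birkhoff_half: "sup a b - sup a' b' \<le> sup (a - a') (b - (b'::'y::banach_lattice))"
proof -
  have "a \<le> sup (a - a') (b - b') + sup a' b'"
    using bl_add_mono2[of "a - a'" "sup (a - a') (b - b')" a' "sup a' b'"] by simp
  moreover have "b \<le> sup (a - a') (b - b') + sup a' b'"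
    using bl_add_mono2[of "b - b'" "sup (a - a') (b - b')" b' "sup a' b'"] by simp
  ultimately have "sup a b \<le> sup (a - a') (b - b') + sup a' b'" by simp
  then show ?thesis using bl_add_le_iff[of "sup a b - sup a' b'" "sup a' b'" "sup (a - a') (b - b')"]
    by simp
qed

lemma absl_diff_commute: "absl (a - b) = absl (b - (a::'y::banach_lattice))"
  using absl_neg[of "a - b"] by simp

lemma birkhoff_B: "sup (a - a') (b - b') \<le> absl (a - a') + absl (b - (b'::'y::banach_lattice))"
proof -
  have "sup (a - a') (b - b') \<le> sup (absl (a - a')) (absl (b - b'))"
    using absl_ge(1)[of "a - a'"] absl_ge(1)[of "b - b'"] by (rule sup_mono)
  also have "\<dots> \<le> absl (a - a') + absl (b - b')" by (intro sup_le_add absl_nonneg)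
  finally show ?thesis .
qed

lemma birkhoff: "absl (sup a b - sup a' b') \<le> absl (a - a') + absl (b - (b'::'y::banach_lattice))"
proof -
  have 1: "sup a b - sup a' b' \<le> absl (a - a') + absl (b - b')"
    using birkhoff_half[of a b a' b'] birkhoff_B[of a a' b b'] by (rule order_trans)
  have "sup a' b' - sup a b \<le> absl (a' - a) + absl (b' - b)"
    using birkhoff_half[of a' b' a b] birkhoff_B[of a' a b' b] by (rule order_trans)
  then have 2: "- (sup a b - sup a' b') \<le> absl (a - a') + absl (b - b')"
    using absl_diff_commute[of a a'] absl_diff_commute[of b b'] by simp
  show ?thesis unfolding absl_def[of "sup a b - sup a' b'"] using 1 2 by (rule sup_least)
qed

lemma inf_le_add: "0 \<le> a \<Longrightarrow> 0 \<le> d \<Longrightarrow> inf (a + b) (d + e) \<le> a + d + inf b (e::'y::banach_lattice)"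
proof -
  assume a: "0 \<le> a" and d: "0 \<le> d"
  have "a + b \<le> a + d + b" using bl_add_mono2[of a a "0 + b" "d + b"] bl_add_le_iff[of 0 b d] d
    by (simp add: add.assoc)
  moreover have "d + e \<le> a + d + e"
    using bl_add_mono2[of 0 a d d] a bl_add_le_iff[of d e "a + d"] by simp
  ultimately have "inf (a + b) (d + e) \<le> inf (a + d + b) (a + d + e)" by (meson inf_mono)
  also have "\<dots> = a + d + inf b e" using bl_inf_add[of b e "a + d"] by (simp add: add.commute)
  finally show ?thesis .
qed

lemma norm_absl: "norm (absl x) = norm (x::'y::banach_lattice)"
  using bl_norm_mono[of x "absl x"] bl_norm_mono[of "absl x" x] absl_abs[of x]
  by (simp add: absl_def[symmetric])

lemma norm_le_absl: "absl x \<le> absl y \<Longrightarrow> norm x \<le> norm (y::'y::banach_lattice)"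
  using bl_norm_mono by (simp add: absl_def)

lemma norm_sup_lip: "norm (sup a b - sup a' b') \<le> norm (a - a') + norm (b - (b'::'y::banach_lattice))"
proof -
  have "absl (absl (a - a') + absl (b - b')) = absl (a - a') + absl (b - b')"
    by (intro absl_of_nonneg) (metis absl_nonneg bl_add_mono2 add_0)
  then have "norm (sup a b - sup a' b') \<le> norm (absl (a - a') + absl (b - b'))"
    using birkhoff[of a b a' b'] by (intro norm_le_absl) simp
  also have "\<dots> \<le> norm (a - a') + norm (b - b')"
    using norm_triangle_ineq[of "absl (a - a')" "absl (b - b')"] by (simp add: norm_absl)
  finally show ?thesis .
qed



definition bl_ideal :: "'y::banach_lattice set \<Rightarrow> bool" where
  "bl_ideal P \<longleftrightarrow> 0 \<in> P \<and> (\<forall>x\<in>P. \<forall>y\<in>P. x + y \<in> P) \<and> (\<forall>x\<in>P. \<forall>c. c *\<^sub>R x \<in> P)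
     \<and> (\<forall>x\<in>P. \<forall>y. absl y \<le> absl x \<longrightarrow> y \<in> P)"

lemma ideal_0: "bl_ideal P \<Longrightarrow> 0 \<in> P"
  and ideal_add: "bl_ideal P \<Longrightarrow> x \<in> P \<Longrightarrow> y \<in> P \<Longrightarrow> x + y \<in> P"
  and ideal_scale: "bl_ideal P \<Longrightarrow> x \<in> P \<Longrightarrow> c *\<^sub>R x \<in> P"
  and ideal_solid: "bl_ideal P \<Longrightarrow> x \<in> P \<Longrightarrow> absl y \<le> absl x \<Longrightarrow> y \<in> P"
  by (auto simp: bl_ideal_def)

lemma ideal_neg: "bl_ideal P \<Longrightarrow> x \<in> P \<Longrightarrow> - x \<in> P"
  using ideal_scale[of P x "-1"] by simp

lemma ideal_diff: "bl_ideal P \<Longrightarrow> x \<in> P \<Longrightarrow> y \<in> P \<Longrightarrow> x - y \<in> P"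
  using ideal_add[of P x "- y"] ideal_neg[of P y] by simp

lemma ideal_absl: "bl_ideal P \<Longrightarrow> absl x \<in> P \<longleftrightarrow> (x::'y::banach_lattice) \<in> P"
  using ideal_solid[of P x "absl x"] ideal_solid[of P "absl x" x] absl_abs[of x] by auto

lemma ideal_le: "bl_ideal P \<Longrightarrow> x \<in> P \<Longrightarrow> 0 \<le> y \<Longrightarrow> y \<le> absl x \<Longrightarrow> (y::'y::banach_lattice) \<in> P"
  using ideal_solid[of P x y] absl_of_nonneg[of y] by simp

lemma scale_le_nonneg: "0 \<le> (x::'y::banach_lattice) \<Longrightarrow> (a::real) \<le> b \<Longrightarrow> a *\<^sub>R x \<le> b *\<^sub>R x"
proof -
  assume x: "0 \<le> x" and ab: "a \<le> b"
  have "(b - a) *\<^sub>R 0 \<le> (b - a) *\<^sub>R x" using bl_scaleR_mono[OF x] ab by simp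
  then have "0 \<le> (b - a) *\<^sub>R x" by simp
  then show ?thesis using bl_le_diff[of "a *\<^sub>R x" "b *\<^sub>R x"] by (simp add: scaleR_diff_left)
qed

lemma absl_sum_nonneg: "0 \<le> absl a + absl (b::'y::banach_lattice)"
  using bl_add_mono2[OF absl_nonneg[of a] absl_nonneg[of b]] by simp

lemma ideal_zero_set: "bl_ideal {0::'y::banach_lattice}"
proof -
  have "y = 0" if "absl y \<le> absl (0::'y)" for y :: 'y
  proof -
    have "absl (0::'y) = 0" by (simp add: absl_def)
    then have "absl y = 0" using that absl_nonneg[of y] by (simp add: order.antisym)
    then show ?thesis by (simp add: absl_zero_iff)
  qed
  then show ?thesis by (auto simp: bl_ideal_def)
qed

lemma ideal_exists_max:
  assumes "(w::'y::banach_lattice) \<noteq> 0"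
  shows "\<exists>P. bl_ideal P \<and> w \<notin> P \<and> (\<forall>Q. bl_ideal Q \<and> w \<notin> Q \<and> P \<subseteq> Q \<longrightarrow> Q = P)"
proof -
  let ?A = "{P. bl_ideal P \<and> w \<notin> P}"
  have "\<exists>U\<in>?A. \<forall>X\<in>C. X \<subseteq> U" if C: "C \<in> chains ?A" for C
  proof (cases "C = {}")
    case True
    then show ?thesis using ideal_zero_set assms by auto
  next
    case False
    have sub: "C \<subseteq> ?A" and ch: "\<forall>X\<in>C. \<forall>Y\<in>C. X \<subseteq> Y \<or> Y \<subseteq> X"
      using C by (auto simp: chains_def chain_subset_def)
    have "bl_ideal (\<Union>C)"
      unfolding bl_ideal_def
    proof (intro conjI ballI allI impI)
      show "0 \<in> \<Union>C" using False sub ideal_0 by blast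
    next
      fix x y assume "x \<in> \<Union>C" "y \<in> \<Union>C"
      then obtain X Y where XY: "X \<in> C" "Y \<in> C" "x \<in> X" "y \<in> Y" by blast
      show "x + y \<in> \<Union>C"
      proof (cases "X \<subseteq> Y")
        case True
        then show ?thesis using XY sub ideal_add[of Y x y] by blast
      next
        case False
        then have "Y \<subseteq> X" using ch XY by blast
        then show ?thesis using XY sub ideal_add[of X x y] by blast
      qed
    next
      fix x c assume "x \<in> \<Union>C"
      then show "c *\<^sub>R x \<in> \<Union>C" using sub ideal_scale by blast
    next
      fix x y assume "x \<in> \<Union>C" "absl y \<le> absl x"
      then show "y \<in> \<Union>C" using sub ideal_solid by blast
    qed
    moreover have "w \<notin> \<Union>C" using sub by blast
    ultimately show ?thesis by blast
  qed
  then obtain M where "M \<in> ?A" "\<forall>X\<in>?A. M \<subseteq> X \<longrightarrow> X = M"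
    using Zorn_Lemma2[of ?A] by blast
  then show ?thesis by blast
qed

definition genI :: "'y::banach_lattice set \<Rightarrow> 'y \<Rightarrow> 'y set" where
  "genI P x = {z. \<exists>p\<in>P. \<exists>c. 0 \<le> c \<and> absl z \<le> absl p + c *\<^sub>R x}"

lemma genI_ideal:
  assumes P: "bl_ideal P" and x: "0 \<le> (x::'y::banach_lattice)"
  shows "bl_ideal (genI P x)"
  unfolding bl_ideal_def
proof (intro conjI ballI allI impI)
  show "0 \<in> genI P x" unfolding genI_def using ideal_0[OF P] by (auto intro!: bexI[of _ 0] exI[of _ 0])
next
  fix z1 z2 assume "z1 \<in> genI P x" "z2 \<in> genI P x"
  then obtain p1 c1 p2 c2 where h: "p1 \<in> P" "0 \<le> c1" "absl z1 \<le> absl p1 + c1 *\<^sub>R x"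
     "p2 \<in> P" "0 \<le> c2" "absl z2 \<le> absl p2 + c2 *\<^sub>R x" unfolding genI_def by blast
  let ?p = "absl p1 + absl p2"
  have pP: "?p \<in> P" using h ideal_add[OF P] ideal_absl[OF P] by blast
  have "absl (z1 + z2) \<le> absl z1 + absl z2" by (rule absl_triangle)
  also have "\<dots> \<le> (absl p1 + c1 *\<^sub>R x) + (absl p2 + c2 *\<^sub>R x)" using h by (intro bl_add_mono2)
  also have "\<dots> = absl ?p + (c1 + c2) *\<^sub>R x"
    using absl_of_nonneg[OF absl_sum_nonneg[of p1 p2]] by (simp add: algebra_simps scaleR_add_left)
  finally show "z1 + z2 \<in> genI P x" unfolding genI_def using pP h by (auto intro!: bexI[of _ ?p] exI[of _ "c1 + c2"])
next
  fix z c assume "z \<in> genI P x"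
  then obtain p c1 where h: "p \<in> P" "0 \<le> c1" "absl z \<le> absl p + c1 *\<^sub>R x" unfolding genI_def by blast
  have "absl (c *\<^sub>R z) = \<bar>c\<bar> *\<^sub>R absl z" by (rule absl_scale)
  also have "\<dots> \<le> \<bar>c\<bar> *\<^sub>R (absl p + c1 *\<^sub>R x)" using h by (intro bl_scaleR_mono) auto
  also have "\<dots> = absl (\<bar>c\<bar> *\<^sub>R p) + (\<bar>c\<bar> * c1) *\<^sub>R x" by (simp add: absl_scale scaleR_add_right)
  finally show "c *\<^sub>R z \<in> genI P x" unfolding genI_def using h ideal_scale[OF P]
    by (auto intro!: bexI[of _ "\<bar>c\<bar> *\<^sub>R p"] exI[of _ "\<bar>c\<bar> * c1"])
next
  fix z y assume "z \<in> genI P x" "absl y \<le> absl z"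
  then show "y \<in> genI P x" unfolding genI_def using order_trans by blast
qed

lemma genI_sup: "bl_ideal P \<Longrightarrow> 0 \<le> x \<Longrightarrow> P \<subseteq> genI P x"
proof
  fix z assume "z \<in> P"
  moreover have "absl z \<le> absl z + (0::real) *\<^sub>R x" by simp
  ultimately show "z \<in> genI P x" unfolding genI_def by blast
qed

lemma genI_mem: "bl_ideal P \<Longrightarrow> 0 \<le> x \<Longrightarrow> x \<in> genI P x"
proof -
  assume P: "bl_ideal P" and x: "0 \<le> x"
  have "absl x \<le> absl 0 + (1::real) *\<^sub>R x" using absl_of_nonneg[OF x] by (simp add: absl_def)
  moreover have "(0::real) \<le> 1" by simp
  ultimately show ?thesis unfolding genI_def using ideal_0[OF P] by (intro CollectI bexI[of _ 0] exI[of _ 1] conjI)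
qed

lemma ideal_prime:
  assumes P: "bl_ideal P" and wP: "(w::'y::banach_lattice) \<notin> P"
    and max: "\<forall>Q. bl_ideal Q \<and> w \<notin> Q \<and> P \<subseteq> Q \<longrightarrow> Q = P"
    and x: "0 \<le> x" and y: "0 \<le> y" and xy: "inf x y = 0"
  shows "x \<in> P \<or> y \<in> P"
proof (rule ccontr)
  assume "\<not> (x \<in> P \<or> y \<in> P)"
  then have nx: "x \<notin> P" and ny: "y \<notin> P" by auto
  have "w \<in> genI P x"
  proof (rule ccontr)
    assume "w \<notin> genI P x"
    then have "genI P x = P" using max genI_ideal[OF P x] genI_sup[OF P x] by simp
    then show False using genI_mem[OF P x] nx by simp
  qed
  then obtain p1 c1 where h1: "p1 \<in> P" "0 \<le> c1" "absl w \<le> absl p1 + c1 *\<^sub>R x" unfolding genI_def by blast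
  have "w \<in> genI P y"
  proof (rule ccontr)
    assume "w \<notin> genI P y"
    then have "genI P y = P" using max genI_ideal[OF P y] genI_sup[OF P y] by simp
    then show False using genI_mem[OF P y] ny by simp
  qed
  then obtain p2 c2 where h2: "p2 \<in> P" "0 \<le> c2" "absl w \<le> absl p2 + c2 *\<^sub>R y" unfolding genI_def by blast
  define c where "c = max c1 c2"
  have c: "0 \<le> c" using h1 by (simp add: c_def)
  have "c1 *\<^sub>R x \<le> c *\<^sub>R x" by (rule scale_le_nonneg[OF x]) (simp add: c_def)
  then have "absl p1 + c1 *\<^sub>R x \<le> absl p1 + c *\<^sub>R x" using bl_add_le_iff2 by blast
  then have "absl w \<le> absl p1 + c *\<^sub>R x" using h1(3) order_trans by blast
  moreover have "c2 *\<^sub>R y \<le> c *\<^sub>R y" by (rule scale_le_nonneg[OF y]) (simp add: c_def)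
  then have "absl p2 + c2 *\<^sub>R y \<le> absl p2 + c *\<^sub>R y" using bl_add_le_iff2 by blast
  then have "absl w \<le> absl p2 + c *\<^sub>R y" using h2(3) order_trans by blast
  ultimately have "absl w \<le> inf (absl p1 + c *\<^sub>R x) (absl p2 + c *\<^sub>R y)" by simp
  also have "\<dots> \<le> absl p1 + absl p2 + inf (c *\<^sub>R x) (c *\<^sub>R y)"
    by (intro inf_le_add absl_nonneg)
  also have "inf (c *\<^sub>R x) (c *\<^sub>R y) = 0" using bl_scale_inf[OF c, of x y] xy by simp
  finally have "absl w \<le> absl (absl p1 + absl p2)"
    using absl_of_nonneg[OF absl_sum_nonneg[of p1 p2]] by simp
  moreover have "absl p1 + absl p2 \<in> P" using h1 h2 ideal_add[OF P] ideal_absl[OF P] by blast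
  ultimately have "w \<in> P" using ideal_solid[OF P] by blast
  then show False using wP by simp
qed



definition NP :: "'y::banach_lattice set \<Rightarrow> 'y \<Rightarrow> bool" where
  "NP P y \<longleftrightarrow> negp y \<in> P"

lemma neg_le_negp: "- a \<le> negp (a::'y::banach_lattice)"
  by (simp add: negp_def)

lemma NP_add:
  assumes P: "bl_ideal P" and a: "NP P a" and b: "NP P (b::'y::banach_lattice)"
  shows "NP P (a + b)"
proof -
  have "- (a + b) \<le> negp a + negp b"
    using bl_add_mono2[OF neg_le_negp[of a] neg_le_negp[of b]] by simp
  moreover have "0 \<le> negp a + negp b"
    using bl_add_mono2[OF negp_nonneg[of a] negp_nonneg[of b]] by simp
  ultimately have "negp (a + b) \<le> negp a + negp b" by (simp add: negp_def)
  moreover have "absl (negp a + negp b) = negp a + negp b"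
    using bl_add_mono2[OF negp_nonneg[of a] negp_nonneg[of b]] by (simp add: absl_of_nonneg)
  moreover have "negp a + negp b \<in> P" using a b P by (simp add: NP_def ideal_add)
  ultimately show ?thesis unfolding NP_def using ideal_le[OF P, of "negp a + negp b" "negp (a+b)"]
    negp_nonneg[of "a + b"] by simp
qed

lemma NP_scale:
  assumes P: "bl_ideal P" and c: "0 \<le> c" and a: "NP P (a::'y::banach_lattice)"
  shows "NP P (c *\<^sub>R a)"
proof -
  have "negp (c *\<^sub>R a) = c *\<^sub>R negp a"
    unfolding negp_def using bl_scale_sup[OF c, of "-a" 0] by simp
  then show ?thesis using a P by (simp add: NP_def ideal_scale)
qed

lemma NP_total:
  assumes prime: "\<forall>x y. 0 \<le> x \<longrightarrow> 0 \<le> y \<longrightarrow> inf x y = 0 \<longrightarrow> x \<in> P \<or> y \<in> P"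
  shows "NP P a \<or> NP P (- (a::'y::banach_lattice))"
proof -
  have "posp a \<in> P \<or> negp a \<in> P"
    using prime posp_nonneg[of a] negp_nonneg[of a] posp_inf_negp[of a] by blast
  then show ?thesis by (auto simp: NP_def negp_neg)
qed

lemma NP_both:
  assumes P: "bl_ideal P" and "NP P a" "NP P (- (a::'y::banach_lattice))"
  shows "a \<in> P"
proof -
  have "posp a + negp a \<in> P" using assms by (simp add: NP_def negp_neg ideal_add)
  then have "absl a \<in> P" by (simp add: posp_plus_negp)
  then show ?thesis using ideal_absl[OF P] by simp
qed

lemma cong_sup:
  assumes P: "bl_ideal P" and "a - a' \<in> P" "b - b' \<in> P"
  shows "sup a b - sup a' (b'::'y::banach_lattice) \<in> P"
proof -
  have "absl (a - a') + absl (b - b') \<in> P" using assms ideal_absl[OF P] ideal_add[OF P] by blast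
  moreover have "absl (absl (a - a') + absl (b - b')) = absl (a - a') + absl (b - b')"
    by (rule absl_of_nonneg[OF absl_sum_nonneg])
  ultimately show ?thesis using ideal_solid[OF P] birkhoff[of a b a' b'] by metis
qed

lemma cong_inf:
  assumes P: "bl_ideal P" and "a - a' \<in> P" "b - b' \<in> P"
  shows "inf a b - inf a' (b'::'y::banach_lattice) \<in> P"
proof -
  have "(- a) - (- a') \<in> P" "(- b) - (- b') \<in> P"
    using assms ideal_neg[OF P] by (metis minus_diff_eq diff_minus_eq_add add.commute diff_conv_add_uminus)+
  then have "sup (- a) (- b) - sup (- a') (- b') \<in> P" by (rule cong_sup[OF P])
  then have "- (sup (- a) (- b) - sup (- a') (- b')) \<in> P" by (rule ideal_neg[OF P])
  moreover have e1: "inf a b = - sup (-a) (-b)" using bl_neg_sup[of "-a" "-b"] by simp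
  moreover have e2: "inf a' b' = - sup (-a') (-b')" using bl_neg_sup[of "-a'" "-b'"] by simp
  ultimately show ?thesis by (simp add: algebra_simps)
qed
lemma dummy_xx: True by simp

lemma sup_NP:
  assumes "NP P (a - (b::'y::banach_lattice))"
  shows "sup a b - a \<in> P"
proof -
  have "sup a b - a = sup (a - a) (b - a)" using bl_sup_add[of a b "-a"] by simp
  also have "\<dots> = negp (a - b)" by (simp add: negp_def sup_commute)
  finally show ?thesis using assms by (simp add: NP_def)
qed

lemma inf_NP:
  assumes P: "bl_ideal P" and "NP P (a - (b::'y::banach_lattice))"
  shows "inf a b - b \<in> P"
proof -
  have "inf a b - b = inf (a - b) (b - b)" using bl_inf_add[of a b "-b"] by simp
  also have "\<dots> = - negp (a - b)" by (simp add: negp_def bl_neg_sup)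
  finally show ?thesis using assms ideal_neg[OF P] by (simp add: NP_def)
qed



definition dotS :: "'a set \<Rightarrow> ('a \<Rightarrow> real) \<Rightarrow> ('a \<Rightarrow> real) \<Rightarrow> real" where
  "dotS S l x = (\<Sum>a\<in>S. l a * x a)"

definition cone :: "(('a \<Rightarrow> real) \<Rightarrow> bool) \<Rightarrow> bool" where
  "cone Pos \<longleftrightarrow> (\<forall>l m. Pos l \<longrightarrow> Pos m \<longrightarrow> Pos (\<lambda>a. l a + m a))
     \<and> (\<forall>c l. 0 \<le> c \<longrightarrow> Pos l \<longrightarrow> Pos (\<lambda>a. c * l a)) \<and> (\<forall>l. Pos l \<or> Pos (\<lambda>a. - l a))"

lemma cone_add: "cone Pos \<Longrightarrow> Pos l \<Longrightarrow> Pos m \<Longrightarrow> (\<And>a. k a = l a + m a) \<Longrightarrow> Pos k"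
proof -
  assume "cone Pos" "Pos l" "Pos m" "\<And>a. k a = l a + m a"
  moreover from this(4) have "k = (\<lambda>a. l a + m a)" by (rule ext)
  ultimately show ?thesis unfolding cone_def by blast
qed

lemma cone_scale: "cone Pos \<Longrightarrow> 0 \<le> c \<Longrightarrow> Pos l \<Longrightarrow> (\<And>a. k a = c * l a) \<Longrightarrow> Pos k"
proof -
  assume "cone Pos" "0 \<le> c" "Pos l" "\<And>a. k a = c * l a"
  moreover from this(4) have "k = (\<lambda>a. c * l a)" by (rule ext)
  ultimately show ?thesis unfolding cone_def by blast
qed

lemma cone_total: "cone Pos \<Longrightarrow> \<not> Pos l \<Longrightarrow> (\<And>a. k a = - l a) \<Longrightarrow> Pos k"
proof -
  assume "cone Pos" "\<not> Pos l" "\<And>a. k a = - l a"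
  moreover from this(3) have "k = (\<lambda>a. - l a)" by (rule ext)
  ultimately show ?thesis unfolding cone_def by blast
qed

lemma dotS_diff: "dotS S (\<lambda>a. l a - m a) x = dotS S l x - dotS S m x"
  by (simp add: dotS_def left_diff_distrib sum_subtractf)

lemma dotS_scale: "dotS S (\<lambda>a. c * l a) x = c * dotS S l x"
  by (simp add: dotS_def sum_distrib_left mult.assoc)

lemma dotS_cong: "(\<And>a. a \<in> S \<Longrightarrow> l a = l' a) \<Longrightarrow> (\<And>a. a \<in> S \<Longrightarrow> x a = x' a) \<Longrightarrow> dotS S l x = dotS S l' x'"
  by (simp add: dotS_def)

lemma reals_between:
  fixes A B :: "real set"
  assumes "finite A" "finite B" "\<forall>a\<in>A. \<forall>b\<in>B. a < b"
  shows "\<exists>t. (\<forall>a\<in>A. a < t) \<and> (\<forall>b\<in>B. t < b)"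
proof (cases "A = {}")
  case True
  show ?thesis
  proof (cases "B = {}")
    case True
    then show ?thesis using \<open>A = {}\<close> by auto
  next
    case False
    then show ?thesis using \<open>A = {}\<close> assms(2)
      by (intro exI[of _ "Min B - 1"]) (auto dest: Min_le[OF assms(2)])
  qed
next
  case False
  show ?thesis
  proof (cases "B = {}")
    case True
    then show ?thesis using False assms(1)
      by (intro exI[of _ "Max A + 1"]) (auto dest: Max_ge[OF assms(1)])
  next
    case BF: False
    have "Max A \<in> A" "Min B \<in> B" using False BF assms by auto
    then have lt: "Max A < Min B" using assms by auto
    show ?thesis
    proof (intro exI[of _ "(Max A + Min B) / 2"] conjI ballI)
      fix a assume "a \<in> A" then have "a \<le> Max A" using assms by auto
      then show "a < (Max A + Min B) / 2" using lt by (simp add: field_simps)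
    next
      fix b assume "b \<in> B" then have "Min B \<le> b" using assms by auto
      then show "(Max A + Min B) / 2 < b" using lt by (simp add: field_simps)
    qed
  qed
qed

lemma SEP:
  assumes "finite S" and cone: "cone Pos"
  shows "finite F \<Longrightarrow> (\<forall>l\<in>F. \<forall>a. a \<notin> S \<longrightarrow> l a = 0) \<Longrightarrow> \<exists>x. \<forall>l\<in>F. Pos l \<longleftrightarrow> 0 \<le> dotS S l x"
  using assms(1)
proof (induction S arbitrary: F rule: finite_induct)
  case empty
  have P0: "Pos (\<lambda>a. 0)" using cone_total[OF cone, of "\<lambda>a. 0" "\<lambda>a. 0"] by auto
  have "\<forall>l\<in>F. l = (\<lambda>a. 0)" using empty by auto
  then show ?case using P0 by (auto simp: dotS_def)
next
  case (insert b S')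
  define e :: "'a \<Rightarrow> real" where "e = (\<lambda>a. if a = b then 1 else 0)"
  define r :: "('a \<Rightarrow> real) \<Rightarrow> 'a \<Rightarrow> real" where "r = (\<lambda>l a. if a = b then 0 else - l a / l b)"
  define R where "R = r ` {l\<in>F. l b \<noteq> 0}"
  define G where "G = (\<lambda>l. l(b := 0)) ` {l\<in>F. l b = 0} \<union> (\<lambda>(r1, r2) a. r1 a - r2 a) ` (R \<times> R)"
  have finR: "finite R" using insert.prems by (simp add: R_def)
  have finG: "finite G" using insert.prems finR by (simp add: G_def)
  have vanR: "\<forall>m\<in>R. \<forall>a. a \<notin> S' \<longrightarrow> m a = 0"
    unfolding R_def
  proof (clarify)
    fix l a assume "l \<in> F" "l b \<noteq> 0" "a \<notin> S'"
    then show "r l a = 0" using insert.prems(2) unfolding r_def by (cases "a = b") auto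
  qed
  have vanG1: "\<forall>m\<in>(\<lambda>(r1, r2) a. r1 a - r2 a) ` (R \<times> R). \<forall>a. a \<notin> S' \<longrightarrow> m a = 0"
  proof (clarify)
    fix r1 r2 a assume "r1 \<in> R" "r2 \<in> R" "a \<notin> S'"
    then have "r1 a = 0" "r2 a = 0" using vanR by blast+
    then show "r1 a - r2 a = 0" by simp
  qed
  have vanG0: "\<forall>m\<in>(\<lambda>l. l(b := 0)) ` {l\<in>F. l b = 0}. \<forall>a. a \<notin> S' \<longrightarrow> m a = 0"
  proof (clarify)
    fix l a assume "l \<in> F" "a \<notin> S'"
    then show "(l(b := 0)) a = 0" using insert.prems(2) by (cases "a = b") auto
  qed
  have vanG: "\<forall>m\<in>G. \<forall>a. a \<notin> S' \<longrightarrow> m a = 0"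
    using vanG0 vanG1 unfolding G_def by blast
  obtain x' where x': "\<forall>l\<in>G. Pos l \<longleftrightarrow> 0 \<le> dotS S' l x'"
    using insert.IH[OF finG vanG] by blast
  have IHR: "Pos (\<lambda>a. r1 a - r2 a) \<longleftrightarrow> dotS S' r2 x' \<le> dotS S' r1 x'" if "r1 \<in> R" "r2 \<in> R" for r1 r2
  proof -
    have "(\<lambda>a. r1 a - r2 a) \<in> (\<lambda>(r1, r2) a. r1 a - r2 a) ` (R \<times> R)"
      by (rule image_eqI[of _ _ "(r1, r2)"]) (auto simp: that)
    then have "(\<lambda>a. r1 a - r2 a) \<in> G" unfolding G_def by blast
    then have "Pos (\<lambda>a. r1 a - r2 a) \<longleftrightarrow> 0 \<le> dotS S' (\<lambda>a. r1 a - r2 a) x'" using x' by blast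
    then show ?thesis unfolding dotS_diff by linarith
  qed
  have Pdiff: "Pos (\<lambda>a. f a - g a)" if "Pos (\<lambda>a. f a - h a)" "Pos (\<lambda>a. h a - g a)" for f g h :: "'a \<Rightarrow> real"
    by (rule cone_add[of Pos "\<lambda>a. f a - h a" "\<lambda>a. h a - g a"]) (use cone that in simp_all)
  have Pswap: "Pos (\<lambda>a. g a - f a)" if "\<not> Pos (\<lambda>a. f a - g a)" for f g :: "'a \<Rightarrow> real"
    by (rule cone_total[of Pos "\<lambda>a. f a - g a"]) (use cone that in simp_all)
  obtain t where t: "\<forall>m\<in>R. (Pos (\<lambda>a. e a - m a) \<longleftrightarrow> dotS S' m x' \<le> t) \<and> (Pos (\<lambda>a. m a - e a) \<longleftrightarrow> t \<le> dotS S' m x')"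
  proof (cases "\<exists>r0\<in>R. Pos (\<lambda>a. e a - r0 a) \<and> Pos (\<lambda>a. r0 a - e a)")
    case True
    then obtain r0 where r0: "r0 \<in> R" "Pos (\<lambda>a. e a - r0 a)" "Pos (\<lambda>a. r0 a - e a)" by blast
    have "\<forall>m\<in>R. (Pos (\<lambda>a. e a - m a) \<longleftrightarrow> dotS S' m x' \<le> dotS S' r0 x') \<and> (Pos (\<lambda>a. m a - e a) \<longleftrightarrow> dotS S' r0 x' \<le> dotS S' m x')"
    proof
      fix m assume m: "m \<in> R"
      have "Pos (\<lambda>a. e a - m a) \<longleftrightarrow> Pos (\<lambda>a. r0 a - m a)"
        using Pdiff[of e r0 m] Pdiff[of r0 e m] r0 by blast
      moreover have "Pos (\<lambda>a. m a - e a) \<longleftrightarrow> Pos (\<lambda>a. m a - r0 a)"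
        using Pdiff[of m r0 e] Pdiff[of m e r0] r0 by blast
      ultimately show "(Pos (\<lambda>a. e a - m a) \<longleftrightarrow> dotS S' m x' \<le> dotS S' r0 x') \<and> (Pos (\<lambda>a. m a - e a) \<longleftrightarrow> dotS S' r0 x' \<le> dotS S' m x')"
        using IHR[OF r0(1) m] IHR[OF m r0(1)] by simp
    qed
    then show ?thesis using that by blast
  next
    case False
    let ?L = "{m\<in>R. Pos (\<lambda>a. e a - m a)}" and ?U = "{m\<in>R. \<not> Pos (\<lambda>a. e a - m a)}"
    have lt: "\<forall>u\<in>(\<lambda>m. dotS S' m x') ` ?L. \<forall>v\<in>(\<lambda>m. dotS S' m x') ` ?U. u < v"
    proof (clarify)
      fix r1 r2 assume r1: "r1 \<in> R" "Pos (\<lambda>a. e a - r1 a)" and r2: "r2 \<in> R" "\<not> Pos (\<lambda>a. e a - r2 a)"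
      have "\<not> Pos (\<lambda>a. r1 a - r2 a)" using Pdiff[of e r1 r2] r1 r2 by blast
      then show "dotS S' r1 x' < dotS S' r2 x'" using IHR[OF r1(1) r2(1)] by simp
    qed
    obtain t where t1: "\<forall>u\<in>(\<lambda>m. dotS S' m x') ` ?L. u < t" and t2: "\<forall>v\<in>(\<lambda>m. dotS S' m x') ` ?U. t < v"
      using reals_between[OF _ _ lt] finR by auto
    have "\<forall>m\<in>R. (Pos (\<lambda>a. e a - m a) \<longleftrightarrow> dotS S' m x' \<le> t) \<and> (Pos (\<lambda>a. m a - e a) \<longleftrightarrow> t \<le> dotS S' m x')"
    proof
      fix m assume m: "m \<in> R"
      show "(Pos (\<lambda>a. e a - m a) \<longleftrightarrow> dotS S' m x' \<le> t) \<and> (Pos (\<lambda>a. m a - e a) \<longleftrightarrow> t \<le> dotS S' m x')"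
      proof (cases "Pos (\<lambda>a. e a - m a)")
        case True
        then have "dotS S' m x' < t" using t1 m by auto
        moreover have "\<not> Pos (\<lambda>a. m a - e a)" using False m True by blast
        ultimately show ?thesis using True by auto
      next
        case F: False
        then have "t < dotS S' m x'" using t2 m by auto
        moreover have "Pos (\<lambda>a. m a - e a)" using Pswap[OF F] .
        ultimately show ?thesis using F by auto
      qed
    qed
    then show ?thesis using that by blast
  qed
  define x where "x = x'(b := t)"
  have dotx: "dotS (insert b S') l x = l b * t + dotS S' l x'" for l
  proof -
    have "dotS S' l x = dotS S' l x'" using insert.hyps(2) by (intro dotS_cong) (auto simp: x_def)
    then show ?thesis using insert.hyps by (simp add: dotS_def x_def)
  qed
  have "\<forall>l\<in>F. Pos l \<longleftrightarrow> 0 \<le> dotS (insert b S') l x"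
  proof
    fix l assume lF: "l \<in> F"
    show "Pos l \<longleftrightarrow> 0 \<le> dotS (insert b S') l x"
    proof (cases "l b = 0")
      case True
      then have lG: "l(b := 0) \<in> G" using lF by (auto simp: G_def)
      have "l(b := 0) = l" using True by auto
      moreover have "dotS S' (l(b := 0)) x' = dotS S' l x'" using insert.hyps(2) by (intro dotS_cong) auto
      ultimately show ?thesis using x' lG dotx[of l] True by auto
    next
      case False
      define c where "c = l b"
      have rR: "r l \<in> R" using lF False by (auto simp: R_def)
      have leq: "l a = c * (e a - r l a)" for a
        using False by (auto simp: c_def e_def r_def)
      have "dotS S' l x' = dotS S' (\<lambda>a. (- c) * r l a) x'"
        using insert.hyps(2) False by (intro dotS_cong) (auto simp: c_def e_def r_def)
      then have dl: "dotS (insert b S') l x = c * (t - dotS S' (r l) x')"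
        using dotx[of l] dotS_scale[of S' "- c" "r l" x'] by (simp add: c_def algebra_simps)
      show ?thesis
      proof (cases "0 < c")
        case True
        have "Pos l \<longleftrightarrow> Pos (\<lambda>a. e a - r l a)"
        proof
          assume "Pos l"
          then show "Pos (\<lambda>a. e a - r l a)"
            using cone_scale[OF cone, of "1 / c" l "\<lambda>a. e a - r l a"] True leq by simp
        next
          assume "Pos (\<lambda>a. e a - r l a)"
          then show "Pos l" using cone_scale[OF cone, of c "\<lambda>a. e a - r l a" l] True leq by simp
        qed
        then show ?thesis using t rR dl True by (simp add: zero_le_mult_iff)
      next
        case F: False
        then have cn: "c < 0" using False by (simp add: c_def)
        have "Pos l \<longleftrightarrow> Pos (\<lambda>a. r l a - e a)"
        proof
          assume "Pos l"
          then show "Pos (\<lambda>a. r l a - e a)"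
            using cone_scale[OF cone, of "- 1 / c" l "\<lambda>a. r l a - e a"] cn leq by (simp add: field_simps)
        next
          assume "Pos (\<lambda>a. r l a - e a)"
          then show "Pos l" using cone_scale[OF cone, of "- c" "\<lambda>a. r l a - e a" l] cn leq by (simp add: algebra_simps)
        qed
        then show ?thesis using t rR dl cn by (simp add: zero_le_mult_iff)
      qed
    qed
  qed
  then show ?case by blast
qed



datatype 'a tm = Var 'a | Zer | Add "'a tm" "'a tm" | Scl real "'a tm" | Mx "'a tm" "'a tm" | Mn "'a tm" "'a tm"

fun evalR :: "'a tm \<Rightarrow> ('a \<Rightarrow> real) \<Rightarrow> real" where
  "evalR (Var a) = delta a"
| "evalR Zer = (\<lambda>x. 0)"
| "evalR (Add s t) = (\<lambda>x. evalR s x + evalR t x)"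
| "evalR (Scl c s) = (\<lambda>x. c * evalR s x)"
| "evalR (Mx s t) = (\<lambda>x. max (evalR s x) (evalR t x))"
| "evalR (Mn s t) = (\<lambda>x. min (evalR s x) (evalR t x))"

fun evalY :: "('a \<Rightarrow> 'y::banach_lattice) \<Rightarrow> 'a tm \<Rightarrow> 'y" where
  "evalY \<phi> (Var a) = \<phi> a"
| "evalY \<phi> Zer = 0"
| "evalY \<phi> (Add s t) = evalY \<phi> s + evalY \<phi> t"
| "evalY \<phi> (Scl c s) = c *\<^sub>R evalY \<phi> s"
| "evalY \<phi> (Mx s t) = sup (evalY \<phi> s) (evalY \<phi> t)"
| "evalY \<phi> (Mn s t) = inf (evalY \<phi> s) (evalY \<phi> t)"

fun vars :: "'a tm \<Rightarrow> 'a set" where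
  "vars (Var a) = {a}"
| "vars Zer = {}"
| "vars (Add s t) = vars s \<union> vars t"
| "vars (Scl c s) = vars s"
| "vars (Mx s t) = vars s \<union> vars t"
| "vars (Mn s t) = vars s \<union> vars t"

fun lin :: "(('a \<Rightarrow> real) \<Rightarrow> bool) \<Rightarrow> 'a tm \<Rightarrow> ('a \<Rightarrow> real)" where
  "lin ps (Var a) = (\<lambda>b. if b = a then 1 else 0)"
| "lin ps Zer = (\<lambda>b. 0)"
| "lin ps (Add s t) = (\<lambda>b. lin ps s b + lin ps t b)"
| "lin ps (Scl c s) = (\<lambda>b. c * lin ps s b)"
| "lin ps (Mx s t) = (if ps (\<lambda>b. lin ps s b - lin ps t b) then lin ps s else lin ps t)"
| "lin ps (Mn s t) = (if ps (\<lambda>b. lin ps s b - lin ps t b) then lin ps t else lin ps s)"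

fun forms :: "(('a \<Rightarrow> real) \<Rightarrow> bool) \<Rightarrow> 'a tm \<Rightarrow> ('a \<Rightarrow> real) set" where
  "forms ps (Var a) = {}"
| "forms ps Zer = {}"
| "forms ps (Add s t) = forms ps s \<union> forms ps t"
| "forms ps (Scl c s) = forms ps s"
| "forms ps (Mx s t) = insert (\<lambda>b. lin ps s b - lin ps t b) (forms ps s \<union> forms ps t)"
| "forms ps (Mn s t) = insert (\<lambda>b. lin ps s b - lin ps t b) (forms ps s \<union> forms ps t)"

definition evalL :: "'a set \<Rightarrow> ('a \<Rightarrow> 'y::banach_lattice) \<Rightarrow> ('a \<Rightarrow> real) \<Rightarrow> 'y" where
  "evalL S \<phi> l = (\<Sum>a\<in>S. l a *\<^sub>R \<phi> a)"

lemma finite_vars: "finite (vars t)"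
  by (induction t) auto

lemma finite_forms: "finite (forms ps t)"
  by (induction t) auto

lemma lin_van: "vars t \<subseteq> S \<Longrightarrow> a \<notin> S \<Longrightarrow> lin ps t a = 0"
  by (induction t) auto

lemma forms_van: "vars t \<subseteq> S \<Longrightarrow> l \<in> forms ps t \<Longrightarrow> a \<notin> S \<Longrightarrow> l a = 0"
  by (induction t) (auto simp: lin_van)

lemma evalL_add: "evalL S \<phi> (\<lambda>b. l b + m b) = evalL S \<phi> l + evalL S \<phi> m"
  by (simp add: evalL_def scaleR_add_left sum.distrib)

lemma evalL_scale: "evalL S \<phi> (\<lambda>b. c * l b) = c *\<^sub>R evalL S \<phi> l"
  by (simp add: evalL_def scaleR_sum_right)

lemma evalL_diff: "evalL S \<phi> (\<lambda>b. l b - m b) = evalL S \<phi> l - evalL S \<phi> m"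
  by (simp add: evalL_def scaleR_diff_left sum_subtractf)

lemma evalL_neg: "evalL S \<phi> (\<lambda>b. - l b) = - evalL S \<phi> l"
  using evalL_scale[of S \<phi> "-1" l] by simp

lemma evalL_var: "finite S \<Longrightarrow> a \<in> S \<Longrightarrow> evalL S \<phi> (\<lambda>b. if b = a then 1 else 0) = \<phi> a"
  by (simp add: evalL_def if_distrib[of "\<lambda>c. c *\<^sub>R _"] cong: if_cong)

lemma dotS_var: "finite S \<Longrightarrow> a \<in> S \<Longrightarrow> dotS S (\<lambda>b. if b = a then 1 else 0) x = x a"
  by (simp add: dotS_def if_distrib[of "\<lambda>c. c * _"] cong: if_cong)

lemma dotS_add: "dotS S (\<lambda>b. l b + m b) x = dotS S l x + dotS S m x"
  by (simp add: dotS_def distrib_right sum.distrib)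

lemma real_lin:
  assumes "finite S"
  shows "(\<forall>l\<in>forms ps t. ps l \<longleftrightarrow> 0 \<le> dotS S l x) \<Longrightarrow> vars t \<subseteq> S \<Longrightarrow> evalR t x = dotS S (lin ps t) x"
proof (induction t)
  case (Var a)
  then show ?case using dotS_var[OF assms, of a x] by (simp add: delta_def)
next
  case Zer
  then show ?case by (simp add: dotS_def)
next
  case (Add s t)
  then show ?case by (simp add: dotS_add)
next
  case (Scl c s)
  then show ?case by (simp add: dotS_scale)
next
  case (Mx s t)
  have d: "ps (\<lambda>b. lin ps s b - lin ps t b) \<longleftrightarrow> dotS S (lin ps t) x \<le> dotS S (lin ps s) x"
    using Mx.prems(1) dotS_diff[of S "lin ps s" "lin ps t" x] by simp
  have "evalR s x = dotS S (lin ps s) x" "evalR t x = dotS S (lin ps t) x" using Mx by auto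
  then show ?case using d by (auto simp: max_def)
next
  case (Mn s t)
  have d: "ps (\<lambda>b. lin ps s b - lin ps t b) \<longleftrightarrow> dotS S (lin ps t) x \<le> dotS S (lin ps s) x"
    using Mn.prems(1) dotS_diff[of S "lin ps s" "lin ps t" x] by simp
  have "evalR s x = dotS S (lin ps s) x" "evalR t x = dotS S (lin ps t) x" using Mn by auto
  then show ?case using d by (auto simp: min_def)
qed

lemma Y_lin:
  fixes \<phi> :: "'a \<Rightarrow> 'y::banach_lattice"
  assumes S: "finite S" and P: "bl_ideal P"
    and prime: "\<forall>x y. 0 \<le> x \<longrightarrow> 0 \<le> y \<longrightarrow> inf x y = 0 \<longrightarrow> x \<in> P \<or> y \<in> P"
    and ps: "ps = (\<lambda>l. NP P (evalL S \<phi> l))"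
  shows "vars t \<subseteq> S \<Longrightarrow> evalY \<phi> t - evalL S \<phi> (lin ps t) \<in> P"
proof (induction t)
  case (Var a)
  then show ?case using evalL_var[OF S, of a \<phi>] ideal_0[OF P] by simp
next
  case Zer
  then show ?case using ideal_0[OF P] by (simp add: evalL_def)
next
  case (Add s t)
  then have "(evalY \<phi> s - evalL S \<phi> (lin ps s)) + (evalY \<phi> t - evalL S \<phi> (lin ps t)) \<in> P"
    using ideal_add[OF P] by simp
  then show ?case by (simp add: evalL_add algebra_simps)
next
  case (Scl c s)
  then have "c *\<^sub>R (evalY \<phi> s - evalL S \<phi> (lin ps s)) \<in> P"
    using ideal_scale[OF P] by simp
  then show ?case by (simp add: evalL_scale algebra_simps)
next
  case (Mx s t)
  let ?A = "evalY \<phi> s" and ?B = "evalY \<phi> t" and ?LA = "evalL S \<phi> (lin ps s)" and ?LB = "evalL S \<phi> (lin ps t)"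
  have 1: "sup ?A ?B - sup ?LA ?LB \<in> P" using Mx by (intro cong_sup[OF P]) auto
  show ?case
  proof (cases "ps (\<lambda>b. lin ps s b - lin ps t b)")
    case True
    then have "NP P (?LA - ?LB)" by (simp add: ps evalL_diff)
    then have "sup ?LA ?LB - ?LA \<in> P" by (rule sup_NP)
    then have "(sup ?A ?B - sup ?LA ?LB) + (sup ?LA ?LB - ?LA) \<in> P" using 1 ideal_add[OF P] by blast
    then show ?thesis using True by simp
  next
    case False
    then have "\<not> NP P (?LA - ?LB)" by (simp add: ps evalL_diff)
    then have "NP P (?LB - ?LA)" using NP_total[OF prime, of "?LA - ?LB"] by simp
    then have "sup ?LB ?LA - ?LB \<in> P" by (rule sup_NP)
    then have "sup ?LA ?LB - ?LB \<in> P" by (simp add: sup_commute)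
    then have "(sup ?A ?B - sup ?LA ?LB) + (sup ?LA ?LB - ?LB) \<in> P" using 1 ideal_add[OF P] by blast
    then show ?thesis using False by simp
  qed
next
  case (Mn s t)
  let ?A = "evalY \<phi> s" and ?B = "evalY \<phi> t" and ?LA = "evalL S \<phi> (lin ps s)" and ?LB = "evalL S \<phi> (lin ps t)"
  have 1: "inf ?A ?B - inf ?LA ?LB \<in> P" using Mn by (intro cong_inf[OF P]) auto
  show ?case
  proof (cases "ps (\<lambda>b. lin ps s b - lin ps t b)")
    case True
    then have "NP P (?LA - ?LB)" by (simp add: ps evalL_diff)
    then have "inf ?LA ?LB - ?LB \<in> P" by (rule inf_NP[OF P])
    then have "(inf ?A ?B - inf ?LA ?LB) + (inf ?LA ?LB - ?LB) \<in> P" using 1 ideal_add[OF P] by blast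
    then show ?thesis using True by simp
  next
    case False
    then have "\<not> NP P (?LA - ?LB)" by (simp add: ps evalL_diff)
    then have "NP P (?LB - ?LA)" using NP_total[OF prime, of "?LA - ?LB"] by simp
    then have "inf ?LB ?LA - ?LA \<in> P" by (rule inf_NP[OF P])
    then have "inf ?LA ?LB - ?LA \<in> P" by (simp add: inf_commute)
    then have "(inf ?A ?B - inf ?LA ?LB) + (inf ?LA ?LB - ?LA) \<in> P" using 1 ideal_add[OF P] by blast
    then show ?thesis using False by simp
  qed
qed

lemma cone_NP:
  fixes \<phi> :: "'a \<Rightarrow> 'y::banach_lattice"
  assumes P: "bl_ideal P"
    and prime: "\<forall>x y. 0 \<le> x \<longrightarrow> 0 \<le> y \<longrightarrow> inf x y = 0 \<longrightarrow> x \<in> P \<or> y \<in> P"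
  shows "cone (\<lambda>l. NP P (evalL S \<phi> l))"
  unfolding cone_def
proof (intro conjI allI impI)
  fix l m assume "NP P (evalL S \<phi> l)" "NP P (evalL S \<phi> m)"
  then show "NP P (evalL S \<phi> (\<lambda>a. l a + m a))" by (simp add: evalL_add NP_add[OF P])
next
  fix c l assume "0 \<le> (c::real)" "NP P (evalL S \<phi> l)"
  then show "NP P (evalL S \<phi> (\<lambda>a. c * l a))" by (simp add: evalL_scale NP_scale[OF P])
next
  fix l
  show "NP P (evalL S \<phi> l) \<or> NP P (evalL S \<phi> (\<lambda>a. - l a))"
    using NP_total[OF prime] by (simp add: evalL_neg)
qed

lemma KEY0:
  fixes \<phi> :: "'a \<Rightarrow> 'y::banach_lattice"
  assumes u: "evalR u = (\<lambda>x. 0)"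
  shows "evalY \<phi> u = 0"
proof (rule ccontr)
  assume ne: "evalY \<phi> u \<noteq> 0"
  define w where "w = absl (evalY \<phi> u)"
  have "w \<noteq> 0" using ne absl_zero_iff[of "evalY \<phi> u"] by (simp add: w_def)
  then obtain P where P: "bl_ideal P" and wP: "w \<notin> P"
    and max: "\<forall>Q. bl_ideal Q \<and> w \<notin> Q \<and> P \<subseteq> Q \<longrightarrow> Q = P"
    using ideal_exists_max by blast
  have prime: "\<forall>x y. 0 \<le> x \<longrightarrow> 0 \<le> y \<longrightarrow> inf x y = 0 \<longrightarrow> x \<in> P \<or> y \<in> P"
    using ideal_prime[OF P wP max] by blast
  define S where "S = vars u"
  have S: "finite S" by (simp add: S_def finite_vars)
  define ps where "ps = (\<lambda>l. NP P (evalL S \<phi> l))"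
  let ?L = "lin ps u"
  define F where "F = insert ?L (insert (\<lambda>a. - ?L a) (forms ps u))"
  have finF: "finite F" by (simp add: F_def finite_forms)
  have vanF: "\<forall>l\<in>F. \<forall>a. a \<notin> S \<longrightarrow> l a = 0"
    unfolding F_def using lin_van[of u S] forms_van[of u S] by (auto simp: S_def)
  obtain x where x: "\<forall>l\<in>F. ps l \<longleftrightarrow> 0 \<le> dotS S l x"
    using SEP[OF S _ finF vanF] cone_NP[OF P prime, of S \<phi>] by (auto simp: ps_def)
  have "evalR u x = dotS S ?L x"
    using real_lin[OF S, of ps u x] x by (simp add: F_def S_def)
  then have d0: "dotS S ?L x = 0" using u by simp
  have "ps ?L" "ps (\<lambda>a. - ?L a)" using x d0 dotS_scale[of S "-1" ?L x] by (auto simp: F_def)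
  then have "NP P (evalL S \<phi> ?L)" "NP P (- evalL S \<phi> ?L)" by (simp_all add: ps_def evalL_neg)
  then have "evalL S \<phi> ?L \<in> P" by (rule NP_both[OF P])
  moreover have "evalY \<phi> u - evalL S \<phi> ?L \<in> P"
    using Y_lin[OF S P prime ps_def] by (simp add: S_def)
  ultimately have "evalY \<phi> u \<in> P" using ideal_add[OF P] by fastforce
  then have "w \<in> P" using ideal_absl[OF P] by (simp add: w_def)
  then show False using wP by simp
qed

lemma KEY:
  fixes \<phi> :: "'a \<Rightarrow> 'y::banach_lattice"
  assumes "evalR s = evalR t"
  shows "evalY \<phi> s = evalY \<phi> t"
proof -
  have "evalR (Add s (Scl (-1) t)) = (\<lambda>x. 0)" using assms by simp
  then have "evalY \<phi> (Add s (Scl (-1) t)) = 0" by (rule KEY0)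
  then show ?thesis by simp
qed



lemma evalR_FVL: "evalR t \<in> FVL"
  by (induction t) (auto intro: FVL.intros)

lemma FVL_evalR: "f \<in> FVL \<Longrightarrow> \<exists>t. evalR t = f"
proof (induction rule: FVL.induct)
  case (gen a) then show ?case by (intro exI[of _ "Var a"]) simp
next
  case zero then show ?case by (intro exI[of _ Zer]) simp
next
  case (add f g)
  then obtain s t where "evalR s = f" "evalR t = g" by blast
  then show ?case by (intro exI[of _ "Add s t"]) auto
next
  case (scale f c)
  then obtain s where "evalR s = f" by blast
  then show ?case by (intro exI[of _ "Scl c s"]) auto
next
  case (sup f g)
  then obtain s t where "evalR s = f" "evalR t = g" by blast
  then show ?case by (intro exI[of _ "Mx s t"]) auto
next
  case (inf f g)
  then obtain s t where "evalR s = f" "evalR t = g" by blast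
  then show ?case by (intro exI[of _ "Mn s t"]) auto
qed

lemma NN_add: "\<nu> \<in> NN \<Longrightarrow> f \<in> FVL \<Longrightarrow> g \<in> FVL \<Longrightarrow> \<nu> (\<lambda>x. f x + g x) \<le> \<nu> f + \<nu> g"
  and NN_scale: "\<nu> \<in> NN \<Longrightarrow> f \<in> FVL \<Longrightarrow> \<nu> (\<lambda>x. c * f x) = \<bar>c\<bar> * \<nu> f"
  and NN_mono: "\<nu> \<in> NN \<Longrightarrow> f \<in> FVL \<Longrightarrow> g \<in> FVL \<Longrightarrow> (\<And>x. \<bar>f x\<bar> \<le> \<bar>g x\<bar>) \<Longrightarrow> \<nu> f \<le> \<nu> g"
  and NN_delta: "\<nu> \<in> NN \<Longrightarrow> \<nu> (delta a) \<le> 1"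
  by (auto simp: NN_def lattice_seminorm_FVL_def)

lemma abs_FVL: "f \<in> FVL \<Longrightarrow> (\<lambda>x. \<bar>f x\<bar>) \<in> FVL"
proof -
  assume f: "f \<in> FVL"
  have "(\<lambda>x. max (f x) ((-1) * f x)) \<in> FVL" using f by (intro FVL.sup FVL.scale)
  moreover have "(\<lambda>x. max (f x) ((-1) * f x)) = (\<lambda>x. \<bar>f x\<bar>)" by (auto simp: abs_if max_def)
  ultimately show ?thesis by simp
qed

lemma NN_abs: "\<nu> \<in> NN \<Longrightarrow> f \<in> FVL \<Longrightarrow> \<nu> (\<lambda>x. \<bar>f x\<bar>) \<le> \<nu> f"
  using NN_mono[of \<nu> "\<lambda>x. \<bar>f x\<bar>" f] abs_FVL[of f] by simp

lemma NN_zero: "\<nu> \<in> NN \<Longrightarrow> \<nu> (\<lambda>x. 0) = 0"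
  using NN_scale[of \<nu> "delta undefined" 0] FVL.gen[of undefined] by simp

lemma NN_maxmin_bound:
  assumes n: "\<nu> \<in> NN" and f: "f \<in> FVL" and g: "g \<in> FVL" and hb: "\<And>x. \<bar>h x\<bar> \<le> \<bar>f x\<bar> + \<bar>g x\<bar>" and h: "h \<in> FVL"
  shows "\<nu> h \<le> \<nu> f + \<nu> g"
proof -
  have af: "(\<lambda>x. \<bar>f x\<bar>) \<in> FVL" by (rule abs_FVL[OF f])
  have ag: "(\<lambda>x. \<bar>g x\<bar>) \<in> FVL" by (rule abs_FVL[OF g])
  have fg: "(\<lambda>x. \<bar>f x\<bar> + \<bar>g x\<bar>) \<in> FVL" using af ag by (rule FVL.add)
  have "\<nu> h \<le> \<nu> (\<lambda>x. \<bar>f x\<bar> + \<bar>g x\<bar>)"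
    using NN_mono[OF n h fg] hb by (simp add: abs_of_nonneg)
  also have "\<dots> \<le> \<nu> (\<lambda>x. \<bar>f x\<bar>) + \<nu> (\<lambda>x. \<bar>g x\<bar>)" by (rule NN_add[OF n af ag])
  also have "\<dots> \<le> \<nu> f + \<nu> g" using NN_abs[OF n f] NN_abs[OF n g] by (rule add_mono)
  finally show ?thesis .
qed

lemma abs_max_le: "\<bar>max (a::real) b\<bar> \<le> \<bar>a\<bar> + \<bar>b\<bar>"
  by (simp add: max_def)

lemma abs_min_le: "\<bar>min (a::real) b\<bar> \<le> \<bar>a\<bar> + \<bar>b\<bar>"
  by (simp add: min_def)

lemma NN_bounded: "f \<in> FVL \<Longrightarrow> \<exists>C. \<forall>\<nu>\<in>NN. \<nu> f \<le> C"
proof (induction rule: FVL.induct)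
  case (gen a) show ?case by (intro exI[of _ 1] ballI NN_delta)
next
  case zero show ?case by (intro exI[of _ 0] ballI) (simp add: NN_zero)
next
  case (add f g)
  then obtain C D where CD: "\<forall>\<nu>\<in>NN. \<nu> f \<le> C" "\<forall>\<nu>\<in>NN. \<nu> g \<le> D" by blast
  show ?case
  proof (intro exI[of _ "C + D"] ballI)
    fix \<nu> :: "(('a \<Rightarrow> real) \<Rightarrow> real) \<Rightarrow> real" assume n: "\<nu> \<in> NN"
    have "\<nu> (\<lambda>x. f x + g x) \<le> \<nu> f + \<nu> g" using NN_add n \<open>f \<in> FVL\<close> \<open>g \<in> FVL\<close> by blast
    moreover have "\<nu> f \<le> C" "\<nu> g \<le> D" using CD n by blast+
    ultimately show "\<nu> (\<lambda>x. f x + g x) \<le> C + D" by linarith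
  qed
next
  case (scale f c)
  then obtain C where C: "\<forall>\<nu>\<in>NN. \<nu> f \<le> C" by blast
  show ?case
  proof (intro exI[of _ "\<bar>c\<bar> * C"] ballI)
    fix \<nu> :: "(('a \<Rightarrow> real) \<Rightarrow> real) \<Rightarrow> real" assume n: "\<nu> \<in> NN"
    have "\<nu> f \<le> C" using C n by blast
    then have "\<bar>c\<bar> * \<nu> f \<le> \<bar>c\<bar> * C" by (simp add: mult_left_mono)
    then show "\<nu> (\<lambda>x. c * f x) \<le> \<bar>c\<bar> * C" using NN_scale[OF n \<open>f \<in> FVL\<close>, of c] by simp
  qed
next
  case (sup f g)
  then obtain C D where CD: "\<forall>\<nu>\<in>NN. \<nu> f \<le> C" "\<forall>\<nu>\<in>NN. \<nu> g \<le> D" by blast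
  show ?case
  proof (intro exI[of _ "C + D"] ballI)
    fix \<nu> :: "(('a \<Rightarrow> real) \<Rightarrow> real) \<Rightarrow> real" assume n: "\<nu> \<in> NN"
    have "\<nu> (\<lambda>x. max (f x) (g x)) \<le> \<nu> f + \<nu> g"
      by (rule NN_maxmin_bound[OF n \<open>f \<in> FVL\<close> \<open>g \<in> FVL\<close> _ FVL.sup[OF \<open>f \<in> FVL\<close> \<open>g \<in> FVL\<close>]]) (rule abs_max_le)
    moreover have "\<nu> f \<le> C" "\<nu> g \<le> D" using CD n by blast+
    ultimately show "\<nu> (\<lambda>x. max (f x) (g x)) \<le> C + D" by linarith
  qed
next
  case (inf f g)
  then obtain C D where CD: "\<forall>\<nu>\<in>NN. \<nu> f \<le> C" "\<forall>\<nu>\<in>NN. \<nu> g \<le> D" by blast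
  show ?case
  proof (intro exI[of _ "C + D"] ballI)
    fix \<nu> :: "(('a \<Rightarrow> real) \<Rightarrow> real) \<Rightarrow> real" assume n: "\<nu> \<in> NN"
    have "\<nu> (\<lambda>x. min (f x) (g x)) \<le> \<nu> f + \<nu> g"
      by (rule NN_maxmin_bound[OF n \<open>f \<in> FVL\<close> \<open>g \<in> FVL\<close> _ FVL.inf[OF \<open>f \<in> FVL\<close> \<open>g \<in> FVL\<close>]]) (rule abs_min_le)
    moreover have "\<nu> f \<le> C" "\<nu> g \<le> D" using CD n by blast+
    ultimately show "\<nu> (\<lambda>x. min (f x) (g x)) \<le> C + D" by linarith
  qed
qed

lemma bdd_NN: "f \<in> FVL \<Longrightarrow> bdd_above ((\<lambda>\<nu>. \<nu> f) ` NN)"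
  using NN_bounded[of f] by (auto simp: bdd_above_def)

lemma zero_NN: "(\<lambda>_. 0) \<in> NN"
  by (simp add: NN_def lattice_seminorm_FVL_def)

lemma NN_ne: "NN \<noteq> {}" using zero_NN by blast

lemma NN_le_fbl: "\<nu> \<in> NN \<Longrightarrow> f \<in> FVL \<Longrightarrow> \<nu> f \<le> fbl_norm f"
  unfolding fbl_norm_def by (rule cSUP_upper[OF _ bdd_NN])

lemma fbl_least: "(\<And>\<nu>. \<nu> \<in> NN \<Longrightarrow> \<nu> f \<le> C) \<Longrightarrow> fbl_norm f \<le> C"
  unfolding fbl_norm_def using NN_ne by (rule cSUP_least) auto

lemma fbl_scale_le: "f \<in> FVL \<Longrightarrow> fbl_norm (\<lambda>x. c * f x) \<le> \<bar>c\<bar> * fbl_norm f"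
  by (rule fbl_least) (simp add: NN_scale NN_le_fbl mult_left_mono)

lemma fbl_zero: "fbl_norm (\<lambda>x::'a \<Rightarrow> real. 0) = 0"
proof -
  have "fbl_norm (\<lambda>x::'a \<Rightarrow> real. 0) \<le> 0" by (rule fbl_least) (simp add: NN_zero)
  moreover have "0 \<le> fbl_norm (\<lambda>x::'a \<Rightarrow> real. 0)" using NN_le_fbl[OF zero_NN FVL.zero] by simp
  ultimately show ?thesis by simp
qed

lemma fbl_scale: "f \<in> FVL \<Longrightarrow> fbl_norm (\<lambda>x. c * f x) = \<bar>c\<bar> * fbl_norm f"
proof (cases "c = 0")
  case True then show ?thesis by (simp add: fbl_zero)
next
  case False
  assume f: "f \<in> FVL"
  have cf: "(\<lambda>x. c * f x) \<in> FVL" using f by (rule FVL.scale)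
  have "fbl_norm (\<lambda>x. (1 / c) * (c * f x)) \<le> \<bar>1 / c\<bar> * fbl_norm (\<lambda>x. c * f x)"
    by (rule fbl_scale_le[OF cf])
  then have "fbl_norm f \<le> fbl_norm (\<lambda>x. c * f x) / \<bar>c\<bar>" using False by simp
  then have "fbl_norm f * \<bar>c\<bar> \<le> fbl_norm (\<lambda>x. c * f x)" using False by (simp add: pos_le_divide_eq)
  then show ?thesis using fbl_scale_le[OF f, of c] by (simp add: mult.commute)
qed

lemma fbl_add:
  fixes f g :: "('a \<Rightarrow> real) \<Rightarrow> real"
  assumes f: "f \<in> FVL" and g: "g \<in> FVL"
  shows "fbl_norm (\<lambda>x. f x + g x) \<le> fbl_norm f + fbl_norm g"
proof (rule fbl_least)
  fix \<nu> :: "(('a \<Rightarrow> real) \<Rightarrow> real) \<Rightarrow> real" assume n: "\<nu> \<in> NN"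
  have "\<nu> (\<lambda>x. f x + g x) \<le> \<nu> f + \<nu> g" by (rule NN_add[OF n f g])
  also have "\<dots> \<le> fbl_norm f + fbl_norm g" using NN_le_fbl[OF n f] NN_le_fbl[OF n g] by (rule add_mono)
  finally show "\<nu> (\<lambda>x. f x + g x) \<le> fbl_norm f + fbl_norm g" .
qed

lemma fbl_mono:
  fixes f g :: "('a \<Rightarrow> real) \<Rightarrow> real"
  assumes f: "f \<in> FVL" and g: "g \<in> FVL" and le: "\<forall>x. \<bar>f x\<bar> \<le> \<bar>g x\<bar>"
  shows "fbl_norm f \<le> fbl_norm g"
proof (rule fbl_least)
  fix \<nu> :: "(('a \<Rightarrow> real) \<Rightarrow> real) \<Rightarrow> real" assume n: "\<nu> \<in> NN"
  have "\<nu> f \<le> \<nu> g" using NN_mono[OF n f g] le by blast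
  also have "\<dots> \<le> fbl_norm g" by (rule NN_le_fbl[OF n g])
  finally show "\<nu> f \<le> fbl_norm g" .
qed

lemma fbl_seminorm: "lattice_seminorm_FVL fbl_norm"
  unfolding lattice_seminorm_FVL_def using fbl_add fbl_scale fbl_mono by blast

lemma fbl_NN: "fbl_norm \<in> NN"
  unfolding NN_def using fbl_seminorm
  by (auto intro!: fbl_least simp: NN_delta)

lemma evalR_dep: "(\<And>a. a \<in> vars t \<Longrightarrow> x a = y a) \<Longrightarrow> evalR t x = evalR t y"
  by (induction t) (auto simp: delta_def)

lemma evalR_hom: "0 \<le> c \<Longrightarrow> evalR t (\<lambda>a. c * x a) = c * evalR t x"
proof (induction t)
  case (Mx s t) then show ?case by (simp add: max_mult_distrib_left)
next
  case (Mn s t) then show ?case by (simp add: min_mult_distrib_left)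
qed (simp_all add: delta_def algebra_simps)

lemma eval_NN: "(\<forall>a. \<bar>y a\<bar> \<le> 1) \<Longrightarrow> (\<lambda>g. \<bar>g y\<bar>) \<in> NN"
  unfolding NN_def lattice_seminorm_FVL_def by (auto simp: abs_mult delta_def)

lemma fbl_definite:
  assumes f: "f \<in> FVL" and z: "fbl_norm f = 0"
  shows "f = (\<lambda>x. 0)"
proof (rule ccontr)
  assume "f \<noteq> (\<lambda>x. 0)"
  then obtain x0 where fx0: "f x0 \<noteq> 0" by auto
  obtain t where t: "evalR t = f" using FVL_evalR[OF f] by blast
  define M where "M = 1 + (\<Sum>a\<in>vars t. \<bar>x0 a\<bar>)"
  have M: "1 \<le> M" unfolding M_def by (simp add: sum_nonneg)
  define y where "y = (\<lambda>a. if a \<in> vars t then (1 / M) * x0 a else 0)"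
  have "\<bar>y a\<bar> \<le> 1" for a
  proof (cases "a \<in> vars t")
    case True
    have "\<bar>x0 a\<bar> \<le> (\<Sum>a\<in>vars t. \<bar>x0 a\<bar>)" using True finite_vars
      by (intro member_le_sum) auto
    then have "\<bar>x0 a\<bar> \<le> M" by (simp add: M_def)
    then show ?thesis using True M by (simp add: y_def abs_mult field_simps)
  qed (simp add: y_def)
  then have nu: "(\<lambda>g. \<bar>g y\<bar>) \<in> NN" by (intro eval_NN allI)
  have "evalR t y = evalR t (\<lambda>a. (1 / M) * x0 a)" by (rule evalR_dep) (simp add: y_def)
  also have "\<dots> = (1 / M) * evalR t x0" using M by (intro evalR_hom) simp
  finally have "f y \<noteq> 0" using fx0 M t by simp
  moreover have "\<bar>f y\<bar> \<le> fbl_norm f" using NN_le_fbl[OF nu f] by simp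
  ultimately show False using z by simp
qed

lemma fbl_norm_lattice: "lattice_norm_FVL fbl_norm"
  unfolding lattice_norm_FVL_def using fbl_seminorm fbl_definite by blast



definition Phi :: "('a \<Rightarrow> 'y::banach_lattice) \<Rightarrow> (('a \<Rightarrow> real) \<Rightarrow> real) \<Rightarrow> 'y" where
  "Phi \<phi> f = evalY \<phi> (SOME t. evalR t = f)"

lemma Phi_eval: "Phi \<phi> (evalR t) = evalY \<phi> t"
proof -
  have "evalR (SOME t'. evalR t' = evalR t) = evalR t" by (rule someI_ex) blast
  then show ?thesis unfolding Phi_def by (rule KEY)
qed

lemma evalY_abs: "evalY \<phi> (Mx s (Scl (-1) s)) = absl (evalY \<phi> s)"
  by (simp add: absl_def)

lemma Phi_NN:
  fixes \<phi> :: "'a \<Rightarrow> 'y::banach_lattice"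
  assumes \<phi>: "\<forall>a. norm (\<phi> a) \<le> 1"
  shows "(\<lambda>f. norm (Phi \<phi> f)) \<in> NN"
  unfolding NN_def lattice_seminorm_FVL_def
proof (intro CollectI conjI ballI allI impI)
  fix f g :: "('a \<Rightarrow> real) \<Rightarrow> real" assume "f \<in> FVL" "g \<in> FVL"
  then obtain s t where st: "evalR s = f" "evalR t = g" using FVL_evalR by blast
  have e: "(\<lambda>x. f x + g x) = evalR (Add s t)" using st by auto
  show "norm (Phi \<phi> (\<lambda>x. f x + g x)) \<le> norm (Phi \<phi> f) + norm (Phi \<phi> g)"
    using Phi_eval[of \<phi> "Add s t"] unfolding st[symmetric] by (simp add: Phi_eval norm_triangle_ineq)
next
  fix f :: "('a \<Rightarrow> real) \<Rightarrow> real" and c :: real assume "f \<in> FVL"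
  then obtain s where st: "evalR s = f" using FVL_evalR by blast
  show "norm (Phi \<phi> (\<lambda>x. c * f x)) = \<bar>c\<bar> * norm (Phi \<phi> f)"
    using Phi_eval[of \<phi> "Scl c s"] unfolding st[symmetric] by (simp add: Phi_eval)
next
  fix f g :: "('a \<Rightarrow> real) \<Rightarrow> real" assume "f \<in> FVL" "g \<in> FVL" and le: "\<forall>x. \<bar>f x\<bar> \<le> \<bar>g x\<bar>"
  then obtain s t where st: "evalR s = f" "evalR t = g" using FVL_evalR by blast
  define D where "D = Add (Mx t (Scl (-1) t)) (Scl (-1) (Mx s (Scl (-1) s)))"
  have "evalR (Mx D Zer) = evalR D"
  proof
    fix x
    have m: "max (f x) (- f x) = \<bar>f x\<bar>" "max (g x) (- g x) = \<bar>g x\<bar>" by auto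
    have "\<bar>f x\<bar> \<le> \<bar>g x\<bar>" using le by blast
    then show "evalR (Mx D Zer) x = evalR D x" unfolding D_def using st m by simp
  qed
  then have "evalY \<phi> (Mx D Zer) = evalY \<phi> D" by (rule KEY)
  then have "0 \<le> evalY \<phi> D" by (metis evalY.simps(2) evalY.simps(5) sup.cobounded2)
  then have "absl (evalY \<phi> s) \<le> absl (evalY \<phi> t)"
    using bl_le_diff[of "absl (evalY \<phi> s)" "absl (evalY \<phi> t)"] by (simp add: D_def absl_def)
  then show "norm (Phi \<phi> f) \<le> norm (Phi \<phi> g)" unfolding st[symmetric] Phi_eval by (rule norm_le_absl)
next
  fix a :: 'a
  have "delta a = evalR (Var a)" by simp
  then show "norm (Phi \<phi> (delta a)) \<le> 1" using \<phi> by (simp add: Phi_eval del: evalR.simps)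
qed

lemma Phi_le_fbl:
  fixes \<phi> :: "'a \<Rightarrow> 'y::banach_lattice"
  assumes \<phi>: "\<forall>a. norm (\<phi> a) \<le> 1" and f: "f \<in> FVL"
  shows "norm (Phi \<phi> f) \<le> fbl_norm f"
  using NN_le_fbl[OF Phi_NN[OF \<phi>] f] by simp

context
  fixes j :: "(('a \<Rightarrow> real) \<Rightarrow> real) \<Rightarrow> 'x::banach_lattice"
  assumes j: "is_completion_map j"
begin

lemma j_add: "f \<in> FVL \<Longrightarrow> g \<in> FVL \<Longrightarrow> j (\<lambda>x. f x + g x) = j f + j g"
  and j_scale: "f \<in> FVL \<Longrightarrow> j (\<lambda>x. c * f x) = c *\<^sub>R j f"
  and j_sup: "f \<in> FVL \<Longrightarrow> g \<in> FVL \<Longrightarrow> j (\<lambda>x. max (f x) (g x)) = sup (j f) (j g)"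
  and j_norm: "f \<in> FVL \<Longrightarrow> norm (j f) = fbl_norm f"
  and j_dense: "closure (j ` FVL) = UNIV"
  using j by (auto simp: is_completion_map_def)

lemma jt_Zer: "j (evalR Zer) = 0"
proof -
  have "j (\<lambda>x. 0 * delta undefined x) = 0 *\<^sub>R j (delta undefined)" by (rule j_scale) (rule FVL.gen)
  then show ?thesis by simp
qed

lemma jt_Add: "j (evalR (Add s t)) = j (evalR s) + j (evalR t)"
  by (simp add: j_add evalR_FVL)

lemma jt_Scl: "j (evalR (Scl c s)) = c *\<^sub>R j (evalR s)"
  by (simp add: j_scale evalR_FVL)

lemma jt_Mx: "j (evalR (Mx s t)) = sup (j (evalR s)) (j (evalR t))"
  by (simp add: j_sup evalR_FVL)

lemma jt_Mn: "j (evalR (Mn s t)) = inf (j (evalR s)) (j (evalR t))"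
proof -
  have e: "evalR (Mn s t) = evalR (Scl (-1) (Mx (Scl (-1) s) (Scl (-1) t)))"
    by (auto simp: min_def max_def)
  have "j (evalR (Mn s t)) = - sup (- j (evalR s)) (- j (evalR t))"
    unfolding e jt_Scl jt_Mx by simp
  also have "\<dots> = inf (j (evalR s)) (j (evalR t))" by (simp add: bl_neg_sup)
  finally show ?thesis .
qed

lemma Phi_lip:
  fixes \<phi> :: "'a \<Rightarrow> 'y::banach_lattice"
  assumes \<phi>: "\<forall>a. norm (\<phi> a) \<le> 1" and f: "f \<in> FVL" and g: "g \<in> FVL"
  shows "norm (Phi \<phi> f - Phi \<phi> g) \<le> norm (j f - j g)"
proof -
  obtain s t where st: "evalR s = f" "evalR t = g" using FVL_evalR f g by blast
  let ?u = "Add s (Scl (-1) t)"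
  have "Phi \<phi> f - Phi \<phi> g = Phi \<phi> (evalR ?u)" unfolding st[symmetric] Phi_eval by simp
  moreover have "j f - j g = j (evalR ?u)" unfolding st[symmetric] jt_Add jt_Scl by simp
  moreover have "norm (Phi \<phi> (evalR ?u)) \<le> norm (j (evalR ?u))"
    using Phi_le_fbl[OF \<phi> evalR_FVL[of ?u]] j_norm[OF evalR_FVL[of ?u]] by simp
  ultimately show ?thesis by simp
qed

lemma dense_eq:
  fixes h1 h2 :: "'x \<Rightarrow> 'z::real_normed_vector"
  assumes "continuous_on UNIV h1" "continuous_on UNIV h2" "\<And>f. f \<in> FVL \<Longrightarrow> h1 (j f) = h2 (j f)"
  shows "h1 x = h2 x"
proof -
  have "j ` FVL \<subseteq> {x. h1 x = h2 x}" using assms(3) by auto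
  moreover have "closed {x. h1 x = h2 x}" using assms(1,2) by (rule closed_Collect_eq)
  ultimately have "closure (j ` FVL) \<subseteq> {x. h1 x = h2 x}" by (rule closure_minimal)
  then show ?thesis using j_dense by auto
qed

end



lemma tendsto_bl_sup:
  fixes f g :: "'b \<Rightarrow> 'y::banach_lattice"
  assumes f: "(f \<longlongrightarrow> a) F" and g: "(g \<longlongrightarrow> b) F"
  shows "((\<lambda>x. sup (f x) (g x)) \<longlongrightarrow> sup a b) F"
proof -
  have "((\<lambda>x. sup (f x) (g x) - sup a b) \<longlongrightarrow> 0) F"
  proof (rule Lim_null_comparison)
    show "\<forall>\<^sub>F x in F. norm (sup (f x) (g x) - sup a b) \<le> norm (f x - a) + norm (g x - b)"
      by (intro always_eventually allI norm_sup_lip)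
    show "((\<lambda>x. norm (f x - a) + norm (g x - b)) \<longlongrightarrow> 0) F"
      by (intro tendsto_add_zero tendsto_norm_zero LIM_zero f g)
  qed
  then show ?thesis by (rule LIM_zero_cancel)
qed

lemma continuous_on_bl_sup:
  fixes f g :: "'b::topological_space \<Rightarrow> 'y::banach_lattice"
  assumes "continuous_on S f" "continuous_on S g"
  shows "continuous_on S (\<lambda>x. sup (f x) (g x))"
  using assms unfolding continuous_on_def by (blast intro: tendsto_bl_sup)

lemma Phi_add: "f \<in> FVL \<Longrightarrow> g \<in> FVL \<Longrightarrow> Phi \<phi> (\<lambda>x. f x + g x) = Phi \<phi> f + Phi \<phi> g"
proof -
  assume "f \<in> FVL" "g \<in> FVL"
  then obtain s t where st: "evalR s = f" "evalR t = g" using FVL_evalR by blast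
  show ?thesis using Phi_eval[of \<phi> "Add s t"] unfolding st[symmetric] by (simp add: Phi_eval)
qed

lemma Phi_scale: "f \<in> FVL \<Longrightarrow> Phi \<phi> (\<lambda>x. c * f x) = c *\<^sub>R Phi \<phi> f"
proof -
  assume "f \<in> FVL"
  then obtain s where st: "evalR s = f" using FVL_evalR by blast
  show ?thesis using Phi_eval[of \<phi> "Scl c s"] unfolding st[symmetric] by (simp add: Phi_eval)
qed

lemma Phi_sup: "f \<in> FVL \<Longrightarrow> g \<in> FVL \<Longrightarrow> Phi \<phi> (\<lambda>x. max (f x) (g x)) = sup (Phi \<phi> f) (Phi \<phi> g)"
proof -
  assume "f \<in> FVL" "g \<in> FVL"
  then obtain s t where st: "evalR s = f" "evalR t = g" using FVL_evalR by blast
  show ?thesis using Phi_eval[of \<phi> "Mx s t"] unfolding st[symmetric] by (simp add: Phi_eval)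
qed

lemma cont_shift:
  fixes g :: "'x::real_normed_vector \<Rightarrow> 'z::topological_space"
  assumes "continuous_on UNIV g"
  shows "continuous_on UNIV (\<lambda>x. g (x + c))" "continuous_on UNIV (\<lambda>x. g (c + x))"
    "continuous_on UNIV (\<lambda>x. g (r *\<^sub>R x))"
  by (rule continuous_on_compose2[OF assms]; auto intro!: continuous_intros)+

context
  fixes j :: "(('a \<Rightarrow> real) \<Rightarrow> real) \<Rightarrow> 'x::banach_lattice"
  assumes j: "is_completion_map j"
begin

lemma T_exists:
  fixes \<phi> :: "'a \<Rightarrow> 'y::banach_lattice"
  assumes \<phi>: "\<forall>a. norm (\<phi> a) \<le> 1"
  shows "\<exists>T :: 'x \<Rightarrow> 'y. lattice_hom T \<and> (\<forall>x. norm (T x) \<le> norm x) \<and> (\<forall>a. T (j (delta a)) = \<phi> a)"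
proof -
  define T0 where "T0 z = Phi \<phi> (SOME f. f \<in> FVL \<and> j f = z)" for z
  have T0j: "T0 (j f) = Phi \<phi> f" if f: "f \<in> FVL" for f
  proof -
    define f' where "f' = (SOME f'. f' \<in> FVL \<and> j f' = j f)"
    have f': "f' \<in> FVL \<and> j f' = j f" unfolding f'_def by (rule someI[of _ f]) (simp add: f)
    have "norm (Phi \<phi> f' - Phi \<phi> f) \<le> norm (j f' - j f)" using Phi_lip[OF j \<phi>] f' f by blast
    then have "Phi \<phi> f' = Phi \<phi> f" using f' by simp
    then show ?thesis by (simp add: T0_def f'_def)
  qed
  have lip: "1-lipschitz_on (j ` FVL) T0"
  proof (rule lipschitz_onI)
    fix x y assume "x \<in> j ` FVL" "y \<in> j ` FVL"
    then obtain f g where fg: "f \<in> FVL" "g \<in> FVL" "x = j f" "y = j g" by blast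
    then show "dist (T0 x) (T0 y) \<le> 1 * dist x y"
      using Phi_lip[OF j \<phi> fg(1,2)] by (simp add: T0j dist_norm)
  qed simp
  obtain g where g1: "1-lipschitz_on (closure (j ` FVL)) g" and g2: "\<forall>x\<in>j ` FVL. g x = T0 x"
    using lipschitz_extend_closure[OF lip] by blast
  have gl: "1-lipschitz_on UNIV g" using g1 j_dense[OF j] by simp
  have gj: "g (j f) = Phi \<phi> f" if "f \<in> FVL" for f using g2 T0j that by auto
  have cont: "continuous_on UNIV g" by (rule lipschitz_on_continuous_on[OF gl])
  have g0: "g 0 = 0"
  proof -
    have "g (j (evalR Zer)) = Phi \<phi> (evalR Zer)" by (rule gj[OF evalR_FVL])
    then have "g (j (evalR Zer)) = 0" by (simp only: Phi_eval) simp
    then show ?thesis using jt_Zer[OF j] by simp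
  qed
  have gnorm: "norm (g x) \<le> norm x" for x
    using lipschitz_on_normD[OF gl, of x 0] g0 by simp
  have gadd1: "g (x + j f) = g x + g (j f)" if f: "f \<in> FVL" for x f
  proof (rule dense_eq[OF j, of "\<lambda>x. g (x + j f)" "\<lambda>x. g x + g (j f)"])
    show "continuous_on UNIV (\<lambda>x. g (x + j f))" by (rule cont_shift[OF cont])
    show "continuous_on UNIV (\<lambda>x. g x + g (j f))" using cont by (intro continuous_intros)
    fix f' :: "('a \<Rightarrow> real) \<Rightarrow> real" assume f': "f' \<in> FVL"
    have "j f' + j f = j (\<lambda>x. f' x + f x)" using j_add[OF j f' f] by simp
    then show "g (j f' + j f) = g (j f') + g (j f)"
      using gj f f' FVL.add[OF f' f] Phi_add[OF f' f] by simp
  qed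
  have gadd: "g (x + y) = g x + g y" for x y
  proof (rule dense_eq[OF j, of "\<lambda>y. g (x + y)" "\<lambda>y. g x + g y"])
    show "continuous_on UNIV (\<lambda>y. g (x + y))" by (rule cont_shift[OF cont])
    show "continuous_on UNIV (\<lambda>y. g x + g y)" using cont by (intro continuous_intros)
    fix f :: "('a \<Rightarrow> real) \<Rightarrow> real" assume "f \<in> FVL"
    then show "g (x + j f) = g x + g (j f)" by (rule gadd1)
  qed
  have gscale: "g (c *\<^sub>R x) = c *\<^sub>R g x" for c x
  proof (rule dense_eq[OF j, of "\<lambda>x. g (c *\<^sub>R x)" "\<lambda>x. c *\<^sub>R g x"])
    show "continuous_on UNIV (\<lambda>x. g (c *\<^sub>R x))" by (rule cont_shift[OF cont])
    show "continuous_on UNIV (\<lambda>x. c *\<^sub>R g x)" using cont by (intro continuous_intros)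
    fix f :: "('a \<Rightarrow> real) \<Rightarrow> real" assume f: "f \<in> FVL"
    have "c *\<^sub>R j f = j (\<lambda>x. c * f x)" using j_scale[OF j f] by simp
    then show "g (c *\<^sub>R j f) = c *\<^sub>R g (j f)" using gj f FVL.scale[OF f] Phi_scale[OF f] by simp
  qed
  have gsup1: "g (sup x (j f)) = sup (g x) (g (j f))" if f: "f \<in> FVL" for x f
  proof (rule dense_eq[OF j, of "\<lambda>x. g (sup x (j f))" "\<lambda>x. sup (g x) (g (j f))"])
    show "continuous_on UNIV (\<lambda>x. g (sup x (j f)))"
      by (rule continuous_on_compose2[OF cont]) (auto intro!: continuous_on_bl_sup continuous_intros)
    show "continuous_on UNIV (\<lambda>x. sup (g x) (g (j f)))" using cont by (intro continuous_on_bl_sup continuous_intros)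
    fix f' :: "('a \<Rightarrow> real) \<Rightarrow> real" assume f': "f' \<in> FVL"
    have "sup (j f') (j f) = j (\<lambda>x. max (f' x) (f x))" using j_sup[OF j f' f] by simp
    then show "g (sup (j f') (j f)) = sup (g (j f')) (g (j f))"
      using gj f f' FVL.sup[OF f' f] Phi_sup[OF f' f] by simp
  qed
  have gsup: "g (sup x y) = sup (g x) (g y)" for x y
  proof (rule dense_eq[OF j, of "\<lambda>y. g (sup x y)" "\<lambda>y. sup (g x) (g y)"])
    show "continuous_on UNIV (\<lambda>y. g (sup x y))"
      by (rule continuous_on_compose2[OF cont]) (auto intro!: continuous_on_bl_sup continuous_intros)
    show "continuous_on UNIV (\<lambda>y. sup (g x) (g y))" using cont by (intro continuous_on_bl_sup continuous_intros)
    fix f :: "('a \<Rightarrow> real) \<Rightarrow> real" assume "f \<in> FVL"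
    then show "g (sup x (j f)) = sup (g x) (g (j f))" by (rule gsup1)
  qed
  have "lattice_hom g" unfolding lattice_hom_def using gadd gscale gsup by (auto intro: linearI)
  moreover have "g (j (delta a)) = \<phi> a" for a
    using gj[OF FVL.gen[of a]] Phi_eval[of \<phi> "Var a"] by simp
  ultimately show ?thesis using gnorm by blast
qed

lemma T_on_FVL:
  fixes \<phi> :: "'a \<Rightarrow> 'y::banach_lattice" and T :: "'x \<Rightarrow> 'y"
  assumes T: "lattice_hom T" and Td: "\<forall>a. T (j (delta a)) = \<phi> a"
  shows "T (j (evalR t)) = evalY \<phi> t"
proof (induction t)
  case (Var a) then show ?case using Td by simp
next
  case Zer
  have "linear T" using T by (simp add: lattice_hom_def)
  then show ?case using jt_Zer[OF j] by (simp add: linear_0)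
next
  case (Add s t)
  have "linear T" using T by (simp add: lattice_hom_def)
  then show ?case using Add jt_Add[OF j, of s t] by (simp add: linear_add)
next
  case (Scl c s)
  have "linear T" using T by (simp add: lattice_hom_def)
  then show ?case using Scl jt_Scl[OF j, of c s] by (simp add: linear_scale)
next
  case (Mx s t)
  then show ?case using T jt_Mx[OF j, of s t] by (simp add: lattice_hom_def)
next
  case (Mn s t)
  have lin: "linear T" using T by (simp add: lattice_hom_def)
  have "inf (j (evalR s)) (j (evalR t)) = - sup (- j (evalR s)) (- j (evalR t))" by (simp add: bl_neg_sup)
  then have "T (j (evalR (Mn s t))) = - sup (- T (j (evalR s))) (- T (j (evalR t)))"
    using jt_Mn[OF j, of s t] T lin by (simp add: lattice_hom_def linear_neg)
  also have "\<dots> = inf (T (j (evalR s))) (T (j (evalR t)))" by (simp add: bl_neg_sup)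
  finally show ?case using Mn by simp
qed

lemma T_unique:
  fixes \<phi> :: "'a \<Rightarrow> 'y::banach_lattice" and T1 T2 :: "'x \<Rightarrow> 'y"
  assumes T1: "lattice_hom T1" "\<forall>x. norm (T1 x) \<le> norm x" "\<forall>a. T1 (j (delta a)) = \<phi> a"
    and T2: "lattice_hom T2" "\<forall>x. norm (T2 x) \<le> norm x" "\<forall>a. T2 (j (delta a)) = \<phi> a"
  shows "T1 = T2"
proof
  have cont: "continuous_on UNIV T" if "lattice_hom T" "\<forall>x. norm (T x) \<le> norm x" for T :: "'x \<Rightarrow> 'y"
  proof -
    have lin: "linear T" using that by (simp add: lattice_hom_def)
    have "bounded_linear T"
      by (rule bounded_linear_intro[where K=1]) (use lin that in \<open>simp_all add: linear_add linear_scale\<close>)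
    then show ?thesis by (rule linear_continuous_on)
  qed
  fix x
  show "T1 x = T2 x"
  proof (rule dense_eq[OF j, of T1 T2])
    show "continuous_on UNIV T1" using cont T1 by blast
    show "continuous_on UNIV T2" using cont T2 by blast
    fix f :: "('a \<Rightarrow> real) \<Rightarrow> real" assume "f \<in> FVL"
    then obtain t where "evalR t = f" using FVL_evalR by blast
    then show "T1 (j f) = T2 (j f)" using T_on_FVL[OF T1(1) T1(3)] T_on_FVL[OF T2(1) T2(3)] by metis
  qed
qed

end

theorem mainTheorem1:
  fixes j :: "(('a \<Rightarrow> real) \<Rightarrow> real) \<Rightarrow> 'x::banach_lattice"
  shows "(\<forall>f\<in>FVL. bdd_above ((\<lambda>\<nu>. \<nu> f) ` (NN :: ((('a \<Rightarrow> real) \<Rightarrow> real) \<Rightarrow> real) set)))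
       \<and> lattice_norm_FVL (fbl_norm :: (('a \<Rightarrow> real) \<Rightarrow> real) \<Rightarrow> real)
       \<and> (fbl_norm :: (('a \<Rightarrow> real) \<Rightarrow> real) \<Rightarrow> real) \<in> NN
       \<and> (\<forall>\<nu>\<in>NN. \<forall>f\<in>FVL. \<nu> f \<le> fbl_norm (f :: ('a \<Rightarrow> real) \<Rightarrow> real))
       \<and> (is_completion_map j \<longrightarrow>
           (\<forall>\<phi> :: 'a \<Rightarrow> 'y::banach_lattice. (\<forall>a. norm (\<phi> a) \<le> 1) \<longrightarrow>
              (\<exists>!T :: 'x \<Rightarrow> 'y. lattice_hom T \<and> (\<forall>x. norm (T x) \<le> norm x)
                   \<and> (\<forall>a. T (j (delta a)) = \<phi> a))))"
proof (intro conjI ballI impI allI)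
  show "\<And>f. f \<in> FVL \<Longrightarrow> bdd_above ((\<lambda>\<nu>. \<nu> f) ` (NN :: ((('a \<Rightarrow> real) \<Rightarrow> real) \<Rightarrow> real) set))"
    by (rule bdd_NN)
  show "lattice_norm_FVL (fbl_norm :: (('a \<Rightarrow> real) \<Rightarrow> real) \<Rightarrow> real)" by (rule fbl_norm_lattice)
  show "(fbl_norm :: (('a \<Rightarrow> real) \<Rightarrow> real) \<Rightarrow> real) \<in> NN" by (rule fbl_NN)
  show "\<And>\<nu> f. \<nu> \<in> NN \<Longrightarrow> f \<in> FVL \<Longrightarrow> \<nu> f \<le> fbl_norm (f :: ('a \<Rightarrow> real) \<Rightarrow> real)"
    by (rule NN_le_fbl)
next
  fix \<phi> :: "'a \<Rightarrow> 'y::banach_lattice"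
  assume j: "is_completion_map j" and \<phi>: "\<forall>a. norm (\<phi> a) \<le> 1"
  obtain T where T: "lattice_hom T" "\<forall>x. norm (T x) \<le> norm x" "\<forall>a. T (j (delta a)) = \<phi> a"
    using T_exists[OF j \<phi>] by blast
  show "\<exists>!T :: 'x \<Rightarrow> 'y. lattice_hom T \<and> (\<forall>x. norm (T x) \<le> norm x) \<and> (\<forall>a. T (j (delta a)) = \<phi> a)"
  proof (rule ex1I[of _ T])
    show "lattice_hom T \<and> (\<forall>x. norm (T x) \<le> norm x) \<and> (\<forall>a. T (j (delta a)) = \<phi> a)" using T by blast
    fix T' assume "lattice_hom T' \<and> (\<forall>x. norm (T' x) \<le> norm x) \<and> (\<forall>a. T' (j (delta a)) = \<phi> a)"
    then show "T' = T" using T_unique[OF j _ _ _ T] by blast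
  qed
qed

end
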